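(* In the Broadcast LOCAL Clique model there is a randomized algorithm that, given a directed graph $G=(V,E,w_G)$ with $n$ nodes and non-negative integer edge weights in $\{0,1,\dots,W\}$, a source node $s$, and a parameter $\epsilon>0$, computes for every node $v$ an estimate $\hat d(s,v)$ with $\mathrm{dist}_G(s,v)\le \hat d(s,v)\le(1+\epsilon)\,\mathrm{dist}_G(s,v)$, and for any integer parameter $1\le h\le n$ spends $R(n)=\tilde O(h\log W/\epsilon)$ rounds and $M(n)=\tilde O\big(n^2\log W/(\epsilon h)\big)$ total message size. The algorithm is correct with high probability.
   Context: Broadcast LOCAL Clique model: the communication network is a clique on the $n$ nodes; communication proceeds in synchronous rounds; every message sent by a node in a round is received by all other nodes, and messages may have arbitrary size (possibly $0$). The complexity of an algorithm is measured by the number of rounds $R(n)$ and the total size $M(n)$ of all messages broadcast over the course of the algorithm. The nodes of the input graph are the nodes of the network; each node initially knows whether it is the source and knows its incident edges and their weights; at the end each node $v$ knows its estimate. $\mathrm{dist}_G(s,v)$ is the minimum weight of a directed path from $s$ to $v$. "With high probability" means with probability at least $1-n^{-c}$ for an arbitrary fixed constant $c$. $\tilde O(\cdot)$ suppresses factors polylogarithmic in $n$. *)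

theory Defs
  imports "HOL-Probability.Probability"
begin

text \<open>A weighted directed graph on the nodes 0..n-1 is a partial weight function
  w u v (None = no edge u->v). Nodes >= n are ignored.\<close>

definition is_walk :: "nat \<Rightarrow> (nat \<Rightarrow> nat \<Rightarrow> nat option) \<Rightarrow> nat list \<Rightarrow> bool" where
  "is_walk n w ps \<longleftrightarrow> ps \<noteq> [] \<and> set ps \<subseteq> {..<n} \<and>
     (\<forall>i < length ps - 1. w (ps ! i) (ps ! Suc i) \<noteq> None)"

definition walk_weight :: "(nat \<Rightarrow> nat \<Rightarrow> nat option) \<Rightarrow> nat list \<Rightarrow> nat" where
  "walk_weight w ps = (\<Sum>i < length ps - 1. the (w (ps ! i) (ps ! Suc i)))"

definition graph_dist :: "nat \<Rightarrow> (nat \<Rightarrow> nat \<Rightarrow> nat option) \<Rightarrow> nat \<Rightarrow> nat \<Rightarrow> ereal" where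
  "graph_dist n w s v =
     (INF ps \<in> {ps. is_walk n w ps \<and> hd ps = s \<and> last ps = v}. ereal (real (walk_weight w ps)))"

text \<open>Global parameters known to all nodes: (n, W, epsilon, h).\<close>
type_synonym params = "nat \<times> nat \<times> real \<times> nat"

text \<open>Local input of a node: (is it the source?, weights of outgoing edges, weights of incoming edges).\<close>
type_synonym local_input = "bool \<times> (nat \<Rightarrow> nat option) \<times> (nat \<Rightarrow> nat option)"

text \<open>A history maps (round, sender) to the broadcast message (a bit string; [] = silent).\<close>
type_synonym history = "nat \<Rightarrow> nat \<Rightarrow> bool list"

text \<open>A randomized algorithm: a fixed number of rounds, a number of private fair coins per
  node, a message function (node id, local input, private coins, current round, history of
  all broadcasts of previous rounds) and an output function.\<close>
record bc_alg =
  num_rounds :: "params \<Rightarrow> nat"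
  num_coins  :: "params \<Rightarrow> nat"
  send       :: "params \<Rightarrow> nat \<Rightarrow> local_input \<Rightarrow> bool list \<Rightarrow> nat \<Rightarrow> history \<Rightarrow> bool list"
  out_fun    :: "params \<Rightarrow> nat \<Rightarrow> local_input \<Rightarrow> bool list \<Rightarrow> history \<Rightarrow> ereal"

definition node_input :: "nat \<Rightarrow> (nat \<Rightarrow> nat \<Rightarrow> nat option) \<Rightarrow> nat \<Rightarrow> nat \<Rightarrow> local_input" where
  "node_input n w s v = (v = s, \<lambda>u. if u < n then w v u else None, \<lambda>u. if u < n then w u v else None)"

fun run_hist :: "bc_alg \<Rightarrow> params \<Rightarrow> (nat \<Rightarrow> local_input) \<Rightarrow> (nat \<Rightarrow> bool list) \<Rightarrow> nat \<Rightarrow> history" where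
  "run_hist A P inp r 0 = (\<lambda>_ _. [])"
| "run_hist A P inp r (Suc t) =
     (\<lambda>t' u. if t' = t \<and> u < fst P then send A P u (inp u) (r u) t (run_hist A P inp r t)
             else run_hist A P inp r t t' u)"

definition final_hist :: "bc_alg \<Rightarrow> params \<Rightarrow> (nat \<Rightarrow> local_input) \<Rightarrow> (nat \<Rightarrow> bool list) \<Rightarrow> history" where
  "final_hist A P inp r = run_hist A P inp r (num_rounds A P)"

definition estimate :: "bc_alg \<Rightarrow> params \<Rightarrow> (nat \<Rightarrow> local_input) \<Rightarrow> (nat \<Rightarrow> bool list) \<Rightarrow> nat \<Rightarrow> ereal" where
  "estimate A P inp r v = out_fun A P v (inp v) (r v) (final_hist A P inp r)"

definition total_msg_size :: "bc_alg \<Rightarrow> params \<Rightarrow> (nat \<Rightarrow> local_input) \<Rightarrow> (nat \<Rightarrow> bool list) \<Rightarrow> nat" where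
  "total_msg_size A P inp r =
     (\<Sum>t < num_rounds A P. \<Sum>u < fst P. length (final_hist A P inp r t u))"

definition coin_space :: "nat \<Rightarrow> nat \<Rightarrow> (nat \<Rightarrow> bool list) set" where
  "coin_space n L = {r. (\<forall>v < n. length (r v) = L) \<and> (\<forall>v. n \<le> v \<longrightarrow> r v = [])}"

definition coins :: "nat \<Rightarrow> nat \<Rightarrow> (nat \<Rightarrow> bool list) pmf" where
  "coins n L = pmf_of_set (coin_space n L)"

end

theory Submission
  imports Defs
begin


fun wk :: "nat \<Rightarrow> (nat \<Rightarrow> nat \<Rightarrow> nat option) \<Rightarrow> nat list \<Rightarrow> bool" where
  "wk n w [] = False"
| "wk n w [x] = (x < n)"
| "wk n w (x # y # r) = (x < n \<and> w x y \<noteq> None \<and> wk n w (y # r))"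

fun ws :: "(nat \<Rightarrow> nat) \<Rightarrow> (nat \<Rightarrow> nat \<Rightarrow> nat option) \<Rightarrow> nat list \<Rightarrow> nat" where
  "ws f w (x # y # r) = f (the (w x y)) + ws f w (y # r)"
| "ws f w _ = 0"

lemma is_walk_Cons2:
  "is_walk n w (x # y # r) \<longleftrightarrow> x < n \<and> w x y \<noteq> None \<and> is_walk n w (y # r)"
proof -
  have "(\<forall>i < length (x # y # r) - 1. w ((x # y # r) ! i) ((x # y # r) ! Suc i) \<noteq> None)
     \<longleftrightarrow> w x y \<noteq> None \<and> (\<forall>i < length (y # r) - 1. w ((y # r) ! i) ((y # r) ! Suc i) \<noteq> None)"
    by (auto simp: less_Suc_eq_0_disj)
  then show ?thesis unfolding is_walk_def by auto
qed

lemma is_walk_wk: "is_walk n w p \<longleftrightarrow> wk n w p"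
proof (induction p rule: wk.induct)
  case (1 n w) then show ?case by (simp add: is_walk_def)
next
  case (2 n w x) then show ?case by (simp add: is_walk_def)
next
  case (3 n w x y r) then show ?case by (simp add: is_walk_Cons2)
qed

lemma walk_weight_ws: "walk_weight w p = ws (\<lambda>a. a) w p"
proof (induction "(\<lambda>a::nat. a)" w p rule: ws.induct)
  case (1 w x y r)
  have "walk_weight w (x # y # r) = the (w x y) + walk_weight w (y # r)"
    unfolding walk_weight_def by (simp add: sum.lessThan_Suc_shift del: sum.lessThan_Suc)
  then show ?case using 1 by simp
next
  case ("2_1" w) then show ?case by (simp add: walk_weight_def)
next
  case ("2_2" w v) then show ?case by (simp add: walk_weight_def)
qed

lemma wk_hd: "wk n w (x # l) \<Longrightarrow> x < n" by (cases l) auto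

lemma join:
  assumes "p \<noteq> []" "q \<noteq> []" "last p = hd q"
  shows "(wk n w (p @ tl q) \<longleftrightarrow> wk n w p \<and> wk n w q) \<and> ws f w (p @ tl q) = ws f w p + ws f w q"
  using assms
proof (induction p rule: induct_list012)
  case 1 then show ?case by simp
next
  case (2 x)
  then have "[x] @ tl q = q" by (cases q) auto
  then show ?case using 2 wk_hd by (cases q) auto
next
  case (3 x y r)
  then show ?case by auto
qed

definition wpath :: "nat \<Rightarrow> (nat \<Rightarrow> nat \<Rightarrow> nat option) \<Rightarrow> nat \<Rightarrow> nat \<Rightarrow> nat list \<Rightarrow> bool" where
  "wpath n w x u p \<longleftrightarrow> wk n w p \<and> hd p = x \<and> last p = u"

lemma wk_nonempty: "wk n w p \<Longrightarrow> p \<noteq> []" by auto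

lemma wk_set: "wk n w p \<Longrightarrow> set p \<subseteq> {..<n}"
  by (induction n w p rule: wk.induct) auto

lemma graph_dist_alt:
  "graph_dist n w x u = (INF p \<in> {p. wpath n w x u p}. ereal (real (ws (\<lambda>a. a) w p)))"
  unfolding graph_dist_def wpath_def is_walk_wk walk_weight_ws by simp

lemma gd_le: "wpath n w x u p \<Longrightarrow> graph_dist n w x u \<le> ereal (real (ws (\<lambda>a. a) w p))"
  unfolding graph_dist_alt by (rule INF_lower) simp

lemma gd_none: "\<not> (\<exists>p. wpath n w x u p) \<Longrightarrow> graph_dist n w x u = \<infinity>"
proof -
  assume a: "\<not> (\<exists>p. wpath n w x u p)"
  then have e: "{p. wpath n w x u p} = {}" by auto
  show ?thesis unfolding graph_dist_alt e by (simp add: top_ereal_def)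
qed

lemma gd_nonneg: "graph_dist n w x u \<ge> 0"
  unfolding graph_dist_alt by (rule INF_greatest) simp

lemma gd_ex:
  assumes "graph_dist n w x u \<noteq> \<infinity>"
  shows "\<exists>p. wpath n w x u p \<and> graph_dist n w x u = ereal (real (ws (\<lambda>a. a) w p))"
proof -
  have ne: "\<exists>p. wpath n w x u p" using assms gd_none by blast
  define k where "k = (LEAST k. \<exists>p. wpath n w x u p \<and> ws (\<lambda>a. a) w p = k)"
  have "\<exists>p. wpath n w x u p \<and> ws (\<lambda>a. a) w p = k"
  proof -
    have "\<exists>k p. wpath n w x u p \<and> ws (\<lambda>a. a) w p = k" using ne by blast
    then show ?thesis unfolding k_def by (rule LeastI_ex)
  qed
  then obtain p where p: "wpath n w x u p" "ws (\<lambda>a. a) w p = k" by blast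
  have "graph_dist n w x u \<ge> ereal (real k)"
    unfolding graph_dist_alt
  proof (rule INF_greatest)
    fix q assume "q \<in> {p. wpath n w x u p}"
    then have "k \<le> ws (\<lambda>a. a) w q" unfolding k_def by (auto intro: Least_le)
    then show "ereal (real k) \<le> ereal (real (ws (\<lambda>a. a) w q))" by simp
  qed
  moreover have "graph_dist n w x u \<le> ereal (real k)" using gd_le[OF p(1)] p(2) by simp
  ultimately have "graph_dist n w x u = ereal (real (ws (\<lambda>a. a) w p))" using p(2) by (simp del: ereal_less_eq)
  then show ?thesis using p(1) by blast
qed

lemma gd_reach: "graph_dist n w x u \<noteq> \<infinity> \<longleftrightarrow> (\<exists>p. wpath n w x u p)"
proof
  assume "graph_dist n w x u \<noteq> \<infinity>" then show "\<exists>p. wpath n w x u p" using gd_ex by blast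
next
  assume "\<exists>p. wpath n w x u p"
  then obtain p where "wpath n w x u p" by blast
  from gd_le[OF this] show "graph_dist n w x u \<noteq> \<infinity>" by auto
qed

lemma wpath_join:
  assumes "wpath n w x y p" "wpath n w y z q"
  shows "wpath n w x z (p @ tl q) \<and> ws f w (p @ tl q) = ws f w p + ws f w q"
proof -
  have ne: "p \<noteq> []" "q \<noteq> []" using assms unfolding wpath_def by auto
  have l: "last p = hd q" using assms unfolding wpath_def by auto
  note j = join[OF ne l, of n w f]
  have "hd (p @ tl q) = x" using assms ne unfolding wpath_def by simp
  moreover have "last (p @ tl q) = z"
  proof (cases "tl q = []")
    case True then have "q = [hd q]" using ne by (cases q) auto
    then show ?thesis using assms l ne unfolding wpath_def by (metis append.right_neutral last_ConsL True)
  next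
    case False then show ?thesis using assms ne unfolding wpath_def by (simp add: last_tl)
  qed
  ultimately show ?thesis using j assms unfolding wpath_def by auto
qed

lemma gd_triangle: "graph_dist n w x z \<le> graph_dist n w x y + graph_dist n w y z"
proof (cases "graph_dist n w x y = \<infinity> \<or> graph_dist n w y z = \<infinity>")
  case True
  then show ?thesis using gd_nonneg[of n w x y] gd_nonneg[of n w y z] by auto
next
  case False
  then obtain p q where p: "wpath n w x y p" "graph_dist n w x y = ereal (real (ws (\<lambda>a. a) w p))"
    and q: "wpath n w y z q" "graph_dist n w y z = ereal (real (ws (\<lambda>a. a) w q))"
    using gd_ex by meson
  note jj = wpath_join[OF p(1) q(1), of "\<lambda>a. a"]
  have "graph_dist n w x z \<le> ereal (real (ws (\<lambda>a. a) w (p @ tl q)))" using gd_le jj by blast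
  also have "\<dots> = graph_dist n w x y + graph_dist n w y z" using jj p q by simp
  finally show ?thesis .
qed

lemma wk_length_distinct: "wk n w p \<Longrightarrow> distinct p \<Longrightarrow> length p \<le> n"
  using wk_set distinct_card by (metis card_lessThan card_mono finite_lessThan)

lemma gd_shortest:
  assumes "graph_dist n w x u \<noteq> \<infinity>"
  shows "\<exists>p. wpath n w x u p \<and> distinct p \<and> graph_dist n w x u = ereal (real (ws (\<lambda>a. a) w p))"
proof -
  let ?d = "graph_dist n w x u"
  let ?P = "\<lambda>p. wpath n w x u p \<and> ?d = ereal (real (ws (\<lambda>a. a) w p))"
  have "\<exists>p. ?P p" using gd_ex[OF assms] .
  then obtain p where p: "?P p" and minl: "\<And>q. ?P q \<Longrightarrow> length p \<le> length q"
    using ex_has_least_nat[where P="?P" and m=length] by blast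
  have "distinct p"
  proof (rule ccontr)
    assume "\<not> distinct p"
    then obtain a z m c where pd: "p = a @ [z] @ m @ [z] @ c" using not_distinct_decomp by blast
    let ?A = "a @ [z]" and ?B = "z # m @ [z]" and ?C = "z # c"
    have e1: "p = ?A @ tl (?B @ tl ?C)" using pd by simp
    have wp: "wpath n w x u p" using p by simp
    have j1: "(wk n w (?A @ tl (?B @ tl ?C)) \<longleftrightarrow> wk n w ?A \<and> wk n w (?B @ tl ?C)) \<and>
       ws (\<lambda>a. a) w (?A @ tl (?B @ tl ?C)) = ws (\<lambda>a. a) w ?A + ws (\<lambda>a. a) w (?B @ tl ?C)"
      by (rule join) auto
    have j2: "(wk n w (?B @ tl ?C) \<longleftrightarrow> wk n w ?B \<and> wk n w ?C) \<and>
       ws (\<lambda>a. a) w (?B @ tl ?C) = ws (\<lambda>a. a) w ?B + ws (\<lambda>a. a) w ?C"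
      by (rule join) auto
    have j3: "(wk n w (?A @ tl ?C) \<longleftrightarrow> wk n w ?A \<and> wk n w ?C) \<and>
       ws (\<lambda>a. a) w (?A @ tl ?C) = ws (\<lambda>a. a) w ?A + ws (\<lambda>a. a) w ?C"
      by (rule join) auto
    let ?q = "?A @ tl ?C"
    have wq: "wk n w ?q" using wp e1 j1 j2 j3 unfolding wpath_def by auto
    have hq: "hd ?q = x" using wp pd unfolding wpath_def by (cases a) auto
    have lq: "last ?q = u" using wp pd unfolding wpath_def by (cases c) auto
    have wpq: "wpath n w x u ?q" using wq hq lq unfolding wpath_def by simp
    have "ws (\<lambda>a. a) w ?q \<le> ws (\<lambda>a. a) w p" using e1 j1 j2 j3 by simp
    then have "?d \<le> ereal (real (ws (\<lambda>a. a) w ?q))" "ereal (real (ws (\<lambda>a. a) w ?q)) \<le> ?d"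
      using gd_le[OF wpq] p by auto
    then have "?P ?q" using wpq by auto
    from minl[OF this] show False using pd by simp
  qed
  then show ?thesis using p by blast
qed

lemma ws_bound:
  assumes "wk n w p" "\<forall>u < n. \<forall>v < n. \<forall>x. w u v = Some x \<longrightarrow> x \<le> W"
  shows "ws (\<lambda>a. a) w p \<le> (length p - 1) * W"
  using assms
proof (induction n w p rule: wk.induct)
  case (3 n w x y r)
  then have "y < n" by (cases r) auto
  then have "the (w x y) \<le> W" using 3 by auto
  then show ?case using 3 by (cases r) auto
qed auto

lemma split_walk:
  assumes "wk n w p" "k < length p"
  shows "wk n w (take (Suc k) p) \<and> wk n w (drop k p) \<and>
         ws f w p = ws f w (take (Suc k) p) + ws f w (drop k p)"
proof -
  have e: "p = take (Suc k) p @ tl (drop k p)" using assms(2)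
    by (metis append_take_drop_id drop_Suc tl_drop)
  have l: "last (take (Suc k) p) = hd (drop k p)" using assms(2)
    by (simp add: hd_drop_conv_nth take_Suc_conv_app_nth)  
  have "take (Suc k) p \<noteq> []" "drop k p \<noteq> []" using assms(2) by auto
  note j = join[OF this l, of n w f]
  then show ?thesis using e assms(1) by metis
qed


fun enc :: "nat \<Rightarrow> nat \<Rightarrow> bool list" where
  "enc 0 x = []"
| "enc (Suc b) x = odd x # enc b (x div 2)"

fun dec :: "bool list \<Rightarrow> nat" where
  "dec [] = 0"
| "dec (a # as) = of_bool a + 2 * dec as"

lemma length_enc[simp]: "length (enc b x) = b"
  by (induction b arbitrary: x) auto

lemma dec_enc: "dec (enc b x) = x mod 2 ^ b"
proof (induction b arbitrary: x)
  case 0 then show ?case by simp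
next
  case (Suc b)
  have "x mod 2 ^ Suc b = x mod 2 + 2 * (x div 2 mod 2 ^ b)"
    by (simp add: mod_mult2_eq mult.commute)
  then show ?case using Suc by (simp add: odd_iff_mod_2_eq_one)
qed

lemma dec_less: "dec a < 2 ^ length a"
  by (induction a) auto

lemma enc_dec: "enc (length a) (dec a) = a"
  by (induction a) auto

definition encs :: "nat \<Rightarrow> nat list \<Rightarrow> bool list" where
  "encs b xs = concat (map (enc b) xs)"

definition decs :: "nat \<Rightarrow> bool list \<Rightarrow> nat list" where
  "decs b bs = map (\<lambda>k. dec (take b (drop (k * b) bs))) [0..<length bs div b]"

lemma length_encs: "length (encs b xs) = b * length xs"
  unfolding encs_def by (induction xs) auto

lemma decs_Nil[simp]: "decs b [] = []" unfolding decs_def by simp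

lemma decs_app:
  assumes "length a = b" "b > 0"
  shows "decs b (a @ rest) = dec a # decs b rest"
proof -
  have l: "length (a @ rest) div b = Suc (length rest div b)"
    using assms by (simp add: div_add_self1)
  have "[0..<Suc (length rest div b)] = 0 # map Suc [0..<length rest div b]"
    by (simp add: map_Suc_upt upt_conv_Cons)
  then show ?thesis unfolding decs_def l using assms
    by (simp add: drop_append add.commute)
qed

lemma decs_encs: "b > 0 \<Longrightarrow> decs b (encs b xs) = map (\<lambda>x. x mod 2 ^ b) xs"
proof (induction xs)
  case Nil then show ?case by (simp add: encs_def)
next
  case (Cons x xs)
  have "encs b (x # xs) = enc b x @ encs b xs" by (simp add: encs_def)
  then show ?case using Cons decs_app[of "enc b x" b "encs b xs"] by (simp add: dec_enc)
qed

lemma length_decs: "length (decs b bs) = length bs div b"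
  unfolding decs_def by simp

lemma set_decs_encs:
  assumes "b > 0" "finite S" "\<forall>x\<in>S. x < 2 ^ b"
  shows "set (decs b (encs b (sorted_list_of_set S))) = S"
  using assms by (simp add: decs_encs)


definition nb :: "nat \<Rightarrow> nat" where "nb n = (LEAST b. n < 2 ^ b)"
definition KK :: "nat \<Rightarrow> nat \<Rightarrow> nat" where "KK n W = (LEAST K. n * W < 2 ^ K)"
definition epsm :: "real \<Rightarrow> real" where "epsm e = min e 1"
definition DD :: "nat \<Rightarrow> real \<Rightarrow> nat" where "DD h e = nat \<lceil>4 * real h / epsm e\<rceil> + h"
definition mm :: "real \<Rightarrow> nat \<Rightarrow> nat \<Rightarrow> nat" where
  "mm c n h = nat \<lceil>2 * (c + 2) * real n * ln (real n) / real h\<rceil>"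
definition rho :: "nat \<Rightarrow> nat \<Rightarrow> real \<Rightarrow> nat \<Rightarrow> real" where
  "rho n h e j = (if j = 0 then 1 / (2 * real n) else epsm e * 2 ^ (j - 1) / (2 * real h))"
definition wr :: "real \<Rightarrow> nat \<Rightarrow> nat" where "wr r a = nat \<lfloor>real a / r\<rfloor> + 1"

definition pn :: "params \<Rightarrow> nat" where "pn P = fst P"
definition pW :: "params \<Rightarrow> nat" where "pW P = fst (snd P)"
definition pe :: "params \<Rightarrow> real" where "pe P = fst (snd (snd P))"
definition ph :: "params \<Rightarrow> nat" where "ph P = snd (snd (snd P))"

definition pD :: "params \<Rightarrow> nat" where "pD P = DD (ph P) (pe P)"
definition pK :: "params \<Rightarrow> nat" where "pK P = KK (pn P) (pW P)"
definition pb :: "params \<Rightarrow> nat" where "pb P = nb (pn P)"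
definition prho :: "params \<Rightarrow> nat \<Rightarrow> real" where "prho P j = rho (pn P) (ph P) (pe P) j"

definition rr :: "params \<Rightarrow> nat" where "rr P = 2 + (pK P + 1) * (pD P + 1)"

definition blk :: "nat \<Rightarrow> nat \<Rightarrow> nat \<Rightarrow> nat" where "blk D j t = 2 + j * (D + 1) + t"

definition srcH :: "nat \<Rightarrow> history \<Rightarrow> nat" where "srcH n H = (LEAST u. u < n \<and> H 0 u \<noteq> [])"
definition XH :: "nat \<Rightarrow> nat \<Rightarrow> history \<Rightarrow> nat set" where
  "XH n b H = insert (srcH n H) {x \<in> set (decs b (H 1 0)). x < n}"

definition cand :: "params \<Rightarrow> nat \<Rightarrow> local_input \<Rightarrow> nat \<Rightarrow> history \<Rightarrow> nat \<Rightarrow> nat \<Rightarrow> bool" where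
  "cand P u inp j H x t' \<longleftrightarrow> (t' = 0 \<and> x = u) \<or>
     (\<exists>y a ty. snd (snd inp) y = Some a \<and> ty < t' \<and> ty + wr (prho P j) a = t' \<and>
        x \<in> set (decs (pb P) (H (blk (pD P) j ty) y)))"

definition dial_msg :: "params \<Rightarrow> nat \<Rightarrow> local_input \<Rightarrow> nat \<Rightarrow> nat \<Rightarrow> history \<Rightarrow> bool list" where
  "dial_msg P u inp j t H = encs (pb P) (sorted_list_of_set
     {x \<in> XH (pn P) (pb P) H. cand P u inp j H x t \<and> (\<forall>t'<t. \<not> cand P u inp j H x t')})"

definition alg_send :: "params \<Rightarrow> nat \<Rightarrow> local_input \<Rightarrow> bool list \<Rightarrow> nat \<Rightarrow> history \<Rightarrow> bool list" where
  "alg_send P u inp r t H = (if t = 0 then (if fst inp then [True] else [])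
     else if t = 1 then (if u = 0 then r else [])
     else dial_msg P u inp ((t - 2) div (pD P + 1)) ((t - 2) mod (pD P + 1)) H)"

definition estH :: "params \<Rightarrow> history \<Rightarrow> nat \<Rightarrow> nat \<Rightarrow> ereal" where
  "estH P H x u = (INF jt \<in> {(j, t). j \<le> pK P \<and> t \<le> pD P \<and> x \<in> set (decs (pb P) (H (blk (pD P) j t) u))}.
      ereal (prho P (fst jt) * real (snd jt)))"

fun hw :: "(nat \<Rightarrow> nat \<Rightarrow> ereal) \<Rightarrow> nat list \<Rightarrow> ereal" where
  "hw E (x # y # r) = E x y + hw E (y # r)"
| "hw E _ = 0"

definition hdist :: "(nat \<Rightarrow> nat \<Rightarrow> ereal) \<Rightarrow> nat \<Rightarrow> nat \<Rightarrow> ereal" where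
  "hdist E x v = (INF q \<in> {q. q \<noteq> [] \<and> hd q = x \<and> last q = v}. hw E q)"

definition flo :: "ereal \<Rightarrow> ereal" where
  "flo E = (if E = \<infinity> then \<infinity> else ereal (real_of_int \<lfloor>real_of_ereal E\<rfloor>))"

definition alg_out :: "params \<Rightarrow> nat \<Rightarrow> local_input \<Rightarrow> bool list \<Rightarrow> history \<Rightarrow> ereal" where
  "alg_out P v inp r H = flo (hdist (estH P H) (srcH (pn P) H) v)"

definition ALG :: "real \<Rightarrow> bc_alg" where
  "ALG c = \<lparr>num_rounds = rr, num_coins = (\<lambda>P. mm c (pn P) (ph P) * pb P),
            send = alg_send, out_fun = alg_out\<rparr>"

definition reachw :: "nat \<Rightarrow> (nat \<Rightarrow> nat \<Rightarrow> nat option) \<Rightarrow> (nat \<Rightarrow> nat) \<Rightarrow> nat \<Rightarrow> nat \<Rightarrow> nat \<Rightarrow> bool" where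
  "reachw n w f x u t \<longleftrightarrow> (\<exists>p. wpath n w x u p \<and> ws f w p = t)"

definition minw :: "nat \<Rightarrow> (nat \<Rightarrow> nat \<Rightarrow> nat option) \<Rightarrow> (nat \<Rightarrow> nat) \<Rightarrow> nat \<Rightarrow> nat \<Rightarrow> nat \<Rightarrow> bool" where
  "minw n w f x u t \<longleftrightarrow> reachw n w f x u t \<and> (\<forall>t'<t. \<not> reachw n w f x u t')"

definition Xs :: "params \<Rightarrow> nat \<Rightarrow> (nat \<Rightarrow> bool list) \<Rightarrow> nat set" where
  "Xs P s r = insert s {x \<in> set (decs (pb P) (r 0)). x < pn P}"

definition Mi :: "params \<Rightarrow> (nat \<Rightarrow> nat \<Rightarrow> nat option) \<Rightarrow> nat \<Rightarrow> (nat \<Rightarrow> bool list) \<Rightarrow> nat \<Rightarrow> nat \<Rightarrow> bool list" where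
  "Mi P w s r t u = (if t = 0 then (if u = s then [True] else [])
     else if t = 1 then (if u = 0 then r 0 else [])
     else encs (pb P) (sorted_list_of_set {x \<in> Xs P s r.
        minw (pn P) w (wr (prho P ((t - 2) div (pD P + 1)))) x u ((t - 2) mod (pD P + 1))}))"

definition Hst :: "params \<Rightarrow> (nat \<Rightarrow> nat \<Rightarrow> nat option) \<Rightarrow> nat \<Rightarrow> (nat \<Rightarrow> bool list) \<Rightarrow> history" where
  "Hst P w s r t u = (if u < pn P \<and> t < rr P then Mi P w s r t u else [])"

lemma nb: "n < 2 ^ nb n" unfolding nb_def by (rule LeastI[of _ n]) simp

lemma nb_pos: "n \<ge> 1 \<Longrightarrow> nb n > 0"
  using nb[of n] by (cases "nb n") auto

lemma KK: "n * W < 2 ^ KK n W" unfolding KK_def by (rule LeastI[of _ "n * W"]) simp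

lemma rho_pos: "n \<ge> 1 \<Longrightarrow> h \<ge> 1 \<Longrightarrow> e > 0 \<Longrightarrow> rho n h e j > 0"
  unfolding rho_def epsm_def by auto

lemma wr_ge1: "wr r a \<ge> 1" unfolding wr_def by simp

lemma wr_lower: "r > 0 \<Longrightarrow> real a \<le> r * real (wr r a)"
proof -
  assume r: "r > 0"
  have "real a / r < real_of_int \<lfloor>real a / r\<rfloor> + 1" by linarith
  moreover have "real_of_int \<lfloor>real a / r\<rfloor> \<ge> 0" using r by simp
  moreover have "real (wr r a) = real_of_int \<lfloor>real a / r\<rfloor> + 1" using r by (simp add: wr_def)
  ultimately have "real a / r \<le> real (wr r a)" by linarith
  then show ?thesis using r by (simp add: field_simps)
qed

lemma wr_upper: "r > 0 \<Longrightarrow> r * real (wr r a) \<le> real a + r"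
proof -
  assume r: "r > 0"
  have "real_of_int \<lfloor>real a / r\<rfloor> \<le> real a / r" by simp
  moreover have "real_of_int \<lfloor>real a / r\<rfloor> \<ge> 0" using r by simp
  moreover have "real (wr r a) = real_of_int \<lfloor>real a / r\<rfloor> + 1" using r by (simp add: wr_def)
  ultimately have "real (wr r a) \<le> real a / r + 1" by linarith
  then have "r * real (wr r a) \<le> r * (real a / r + 1)" using r by (intro mult_left_mono) auto
  moreover have "r * (real a / r + 1) = real a + r" using r by (simp add: field_simps)
  ultimately show ?thesis by linarith
qed

lemma reach_step:
  assumes f1: "\<forall>a. f a \<ge> 1" and u: "u < n"
  shows "reachw n w f x u t \<longleftrightarrow> (t = 0 \<and> x = u) \<or>
    (\<exists>y a ty. y < n \<and> w y u = Some a \<and> reachw n w f x y ty \<and> t = ty + f a)"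
proof
  assume "reachw n w f x u t"
  then obtain p where p: "wpath n w x u p" "ws f w p = t" unfolding reachw_def by blast
  show "(t = 0 \<and> x = u) \<or> (\<exists>y a ty. y < n \<and> w y u = Some a \<and> reachw n w f x y ty \<and> t = ty + f a)"
  proof (cases "length p \<le> 1")
    case True
    then have "p = [hd p]" using p unfolding wpath_def
      by (cases p) auto
    then show ?thesis using p unfolding wpath_def by (metis last_ConsL ws.simps(3))
  next
    case False
    define k where "k = length p - 2"
    have k: "k < length p" "Suc (Suc k) = length p" using False unfolding k_def by auto
    have sw: "wk n w (take (Suc k) p) \<and> wk n w (drop k p) \<and> ws f w p = ws f w (take (Suc k) p) + ws f w (drop k p)"
      using split_walk[OF _ k(1)] p unfolding wpath_def by blast
    have dk: "drop k p = [p ! k, p ! Suc k]" using k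
      by (metis Cons_nth_drop_Suc drop_all le_refl lessI)
    have lu: "p ! Suc k = u" using p k unfolding wpath_def by (metis last_conv_nth list.size(3) Zero_not_Suc diff_Suc_1)
    obtain a where a: "w (p ! k) u = Some a" using sw dk lu by auto
    have yn: "p ! k < n" using sw dk by simp
    have h1: "hd (take (Suc k) p) = hd p" by (cases p) auto
    have h2: "last (take (Suc k) p) = p ! k" using k(1) by (simp add: take_Suc_conv_app_nth)
    have "wpath n w x (p ! k) (take (Suc k) p)" using sw p h1 h2 unfolding wpath_def by simp
    then have "reachw n w f x (p ! k) (ws f w (take (Suc k) p))" unfolding reachw_def by blast
    moreover have "ws f w (drop k p) = f a" using dk lu a by simp
    ultimately show ?thesis using yn a sw p(2) by auto
  qed
next
  assume "(t = 0 \<and> x = u) \<or> (\<exists>y a ty. y < n \<and> w y u = Some a \<and> reachw n w f x y ty \<and> t = ty + f a)"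
  then show "reachw n w f x u t"
  proof
    assume "t = 0 \<and> x = u"
    then have "wpath n w x u [u] \<and> ws f w [u] = t" using u unfolding wpath_def by simp
    then show ?thesis unfolding reachw_def by blast
  next
    assume "\<exists>y a ty. y < n \<and> w y u = Some a \<and> reachw n w f x y ty \<and> t = ty + f a"
    then obtain y a ty p where y: "y < n" "w y u = Some a" "wpath n w x y p" "ws f w p = ty" "t = ty + f a"
      unfolding reachw_def by blast
    have "wpath n w y u [y, u]" using y u unfolding wpath_def by simp
    from wpath_join[OF y(3) this, of f] show ?thesis unfolding reachw_def using y by auto
  qed
qed

lemma minw_ex: "reachw n w f x u t \<Longrightarrow> \<exists>t0\<le>t. minw n w f x u t0"
proof -
  assume r: "reachw n w f x u t"
  define t0 where "t0 = (LEAST t. reachw n w f x u t)"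
  have "reachw n w f x u t0" unfolding t0_def using r by (rule LeastI)
  moreover have "\<forall>t'<t0. \<not> reachw n w f x u t'" unfolding t0_def using not_less_Least by blast
  moreover have "t0 \<le> t" unfolding t0_def using r by (rule Least_le)
  ultimately show ?thesis unfolding minw_def by blast
qed

lemma minw_unique: "minw n w f x u t \<Longrightarrow> minw n w f x u t' \<Longrightarrow> t = t'"
  unfolding minw_def by (meson linorder_neqE_nat)

definition Cst :: "nat \<Rightarrow> (nat \<Rightarrow> nat \<Rightarrow> nat option) \<Rightarrow> (nat \<Rightarrow> nat) \<Rightarrow> nat \<Rightarrow> nat \<Rightarrow> nat \<Rightarrow> bool" where
  "Cst n w f x u t \<longleftrightarrow> (t = 0 \<and> x = u) \<or> (\<exists>y a ty. y < n \<and> w y u = Some a \<and> minw n w f x y ty \<and> t = ty + f a)"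

lemma CR:
  assumes f1: "\<forall>a. f a \<ge> 1" and u: "u < n" and c: "Cst n w f x u t"
  shows "reachw n w f x u t"
proof -
  have "(t = 0 \<and> x = u) \<or> (\<exists>y a ty. y < n \<and> w y u = Some a \<and> reachw n w f x y ty \<and> t = ty + f a)"
    using c unfolding Cst_def minw_def by blast
  then show ?thesis by (rule reach_step[OF f1 u, THEN iffD2])
qed

lemma RC:
  assumes f1: "\<forall>a. f a \<ge> 1" and u: "u < n" and r: "reachw n w f x u t"
  shows "\<exists>t''\<le>t. Cst n w f x u t''"
proof -
  have "(t = 0 \<and> x = u) \<or> (\<exists>y a ty. y < n \<and> w y u = Some a \<and> reachw n w f x y ty \<and> t = ty + f a)"
    using r by (rule reach_step[OF f1 u, THEN iffD1])
  then show ?thesis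
  proof
    assume "t = 0 \<and> x = u" then show ?thesis unfolding Cst_def by blast
  next
    assume "\<exists>y a ty. y < n \<and> w y u = Some a \<and> reachw n w f x y ty \<and> t = ty + f a"
    then obtain y a ty where y: "y < n" "w y u = Some a" "reachw n w f x y ty" "t = ty + f a" by blast
    obtain t0 where t0: "t0 \<le> ty" "minw n w f x y t0" using minw_ex[OF y(3)] by blast
    have "Cst n w f x u (t0 + f a)" unfolding Cst_def using y t0 by blast
    moreover have "t0 + f a \<le> t" using y t0 by simp
    ultimately show ?thesis by blast
  qed
qed

lemma minw_step:
  assumes f1: "\<forall>a. f a \<ge> 1" and u: "u < n"
  shows "(Cst n w f x u t \<and> (\<forall>t'<t. \<not> Cst n w f x u t')) \<longleftrightarrow> minw n w f x u t"
proof
  assume a: "Cst n w f x u t \<and> (\<forall>t'<t. \<not> Cst n w f x u t')"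
  have "reachw n w f x u t" using CR[OF f1 u] a by blast
  moreover have "\<not> reachw n w f x u t'" if "t' < t" for t'
  proof
    assume "reachw n w f x u t'"
    then obtain t'' where "t'' \<le> t'" "Cst n w f x u t''" using RC[OF f1 u] by blast
    then show False using a that by simp
  qed
  ultimately show "minw n w f x u t" unfolding minw_def by blast
next
  assume m: "minw n w f x u t"
  then obtain t'' where t'': "t'' \<le> t" "Cst n w f x u t''" using RC[OF f1 u] unfolding minw_def by blast
  have "reachw n w f x u t''" using CR[OF f1 u t''(2)] .
  then have "\<not> t'' < t" using m unfolding minw_def by blast
  then have "t'' = t" using t''(1) by simp
  moreover have "\<not> Cst n w f x u t'" if "t' < t" for t'
  proof
    assume "Cst n w f x u t'"
    then have "reachw n w f x u t'" using CR[OF f1 u] by blast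
    then show False using m that unfolding minw_def by blast
  qed
  ultimately show "Cst n w f x u t \<and> (\<forall>t'<t. \<not> Cst n w f x u t')" using t'' by blast
qed


lemma run_hist_gen:
  "run_hist A P inp r k t u = (if t < k \<and> u < fst P then send A P u (inp u) (r u) t (run_hist A P inp r t) else [])"
  by (induction k arbitrary: t u) auto

locale stp =
  fixes c :: real and n W :: nat and e :: real and h :: nat and w :: "nat \<Rightarrow> nat \<Rightarrow> nat option" and s :: nat
  assumes sn: "s < n" and epos: "e > 0" and h1: "1 \<le> h"
begin

abbreviation "P \<equiv> (n, W, e, h)"
abbreviation "inp \<equiv> node_input n w s"

lemma pP[simp]: "pn P = n" "pW P = W" "pe P = e" "ph P = h"
  unfolding pn_def pW_def pe_def ph_def by simp_all

lemma n1: "n \<ge> 1" using sn by simp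

lemma b_pos: "pb P > 0" unfolding pb_def using nb_pos n1 by simp

lemma n_less_b: "n < 2 ^ pb P" unfolding pb_def using nb by simp

lemma R2: "rr P \<ge> 2" unfolding rr_def by simp

lemma prho_pos: "prho P j > 0" unfolding prho_def using rho_pos n1 h1 epos by simp

lemma f1: "\<forall>a. wr (prho P j) a \<ge> 1" using wr_ge1 by blast

lemma Xs_sub: "Xs P s r \<subseteq> {..<n}" unfolding Xs_def using sn by auto

lemma Xs_fin: "finite (Xs P s r)" using Xs_sub finite_subset by blast

lemma set_Mi:
  assumes "k \<ge> 2"
  shows "set (decs (pb P) (Mi P w s r k y)) =
    {x \<in> Xs P s r. minw n w (wr (prho P ((k - 2) div (pD P + 1)))) x y ((k - 2) mod (pD P + 1))}"
proof -
  have "finite {x \<in> Xs P s r. minw n w (wr (prho P ((k - 2) div (pD P + 1)))) x y ((k - 2) mod (pD P + 1))}"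
    using Xs_fin by simp
  moreover have "\<forall>x\<in>{x \<in> Xs P s r. minw n w (wr (prho P ((k - 2) div (pD P + 1)))) x y ((k - 2) mod (pD P + 1))}. x < 2 ^ pb P"
    using Xs_sub[of r] n_less_b by fastforce
  ultimately show ?thesis unfolding Mi_def using assms set_decs_encs[OF b_pos] by simp
qed

lemma blk_div: "ty \<le> D \<Longrightarrow> (blk D j ty - 2) div (D + 1) = j"
proof -
  assume "ty \<le> D"
  have "blk D j ty - 2 = ty + (D + 1) * j" unfolding blk_def by simp
  then show ?thesis using \<open>ty \<le> D\<close> by (simp only: div_mult_self2) simp
qed

lemma blk_mod: "ty \<le> D \<Longrightarrow> (blk D j ty - 2) mod (D + 1) = ty"
proof -
  assume "ty \<le> D"
  have "blk D j ty - 2 = ty + (D + 1) * j" unfolding blk_def by simp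
  then show ?thesis using \<open>ty \<le> D\<close> by (simp only: mod_mult_self2) simp
qed

lemma send_correct:
  assumes k: "k < rr P" and u: "u < n" and agree: "\<forall>t'<k. \<forall>y. H t' y = Hst P w s r t' y"
  shows "alg_send P u (inp u) (r u) k H = Mi P w s r k u"
proof -
  consider "k = 0" | "k = 1" | "k \<ge> 2" by linarith
  then show ?thesis
  proof cases
    case 1 then show ?thesis unfolding alg_send_def Mi_def node_input_def by simp
  next
    case 2 then show ?thesis unfolding alg_send_def Mi_def by simp
  next
    case 3
    define D where "D = pD P"
    define j where "j = (k - 2) div (D + 1)"
    define tt where "tt = (k - 2) mod (D + 1)"
    define f where "f = wr (prho P j)"
    have ttD: "tt \<le> D" unfolding tt_def
      using less_Suc_eq_le mod_less_divisor by (metis Suc_eq_plus1 zero_less_Suc)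
    have "k - 2 = j * (D + 1) + tt" unfolding j_def tt_def by (simp only: div_mult_mod_eq)
    then have kb: "k = blk D j tt" unfolding blk_def using 3 by simp
    have H0: "H 0 y = (if y = s then [True] else [])" if "y < n" for y
      using agree 3 R2 that unfolding Hst_def Mi_def by auto
    have H0': "H 0 y = []" if "y \<ge> n" for y
      using agree 3 that unfolding Hst_def by auto
    have src: "srcH n H = s"
    proof -
      have "\<And>y. (y < n \<and> H 0 y \<noteq> []) \<longleftrightarrow> y = s" using H0 H0' sn by (metis list.distinct(1) not_le)
      moreover have "(LEAST u. u = s) = s" by (rule Least_equality) auto
      ultimately show ?thesis unfolding srcH_def by simp
    qed
    have H1: "H 1 0 = r 0" using agree 3 k n1 unfolding Hst_def Mi_def by auto
    have XH: "XH n (pb P) H = Xs P s r" unfolding XH_def Xs_def src H1 by simp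
    have Hb: "set (decs (pb P) (H (blk D j ty) y)) =
        (if y < n then {x \<in> Xs P s r. minw n w f x y ty} else {})" if "ty < tt" for ty y
    proof -
      have lt: "blk D j ty < k" using kb that unfolding blk_def by simp
      then have "H (blk D j ty) y = Hst P w s r (blk D j ty) y" using agree by blast
      moreover have "blk D j ty < rr P" using lt k by simp
      moreover have "blk D j ty \<ge> 2" unfolding blk_def by simp
      moreover have "ty \<le> D" using that ttD by simp
      ultimately show ?thesis unfolding Hst_def using set_Mi[where k="blk D j ty" and y=y and r=r] blk_div blk_mod
        unfolding D_def f_def by auto
    qed
    have candC: "cand P u (inp u) j H x t' \<longleftrightarrow> Cst n w f x u t'" if xX: "x \<in> Xs P s r" and tt: "t' \<le> tt" for x t'
    proof -
      have i: "(if y < n then w y u else None) = Some a \<longleftrightarrow> y < n \<and> w y u = Some a" for y a by simp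
      have "cand P u (inp u) j H x t' \<longleftrightarrow> (t' = 0 \<and> x = u) \<or>
         (\<exists>y a ty. y < n \<and> w y u = Some a \<and> ty < t' \<and> ty + f a = t' \<and> x \<in> set (decs (pb P) (H (blk D j ty) y)))"
        unfolding cand_def node_input_def f_def D_def snd_conv i by (simp only: conj_assoc)
      also have "\<dots> \<longleftrightarrow> (t' = 0 \<and> x = u) \<or>
         (\<exists>y a ty. y < n \<and> w y u = Some a \<and> ty < t' \<and> ty + f a = t' \<and> minw n w f x y ty)"
      proof -
        have eq: "(y < n \<and> w y u = Some a \<and> ty < t' \<and> ty + f a = t' \<and> x \<in> set (decs (pb P) (H (blk D j ty) y)))
          = (y < n \<and> w y u = Some a \<and> ty < t' \<and> ty + f a = t' \<and> minw n w f x y ty)" for y a ty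
        proof (cases "ty < t' \<and> y < n")
          case True
          have tyt: "ty < tt" using tt True by simp
          show ?thesis using Hb[OF tyt, of y] True xX by auto
        next
          case False then show ?thesis by auto
        qed
        show ?thesis by (simp only: eq)
      qed
      also have "\<dots> \<longleftrightarrow> Cst n w f x u t'"
      proof -
        have eq: "(y < n \<and> w y u = Some a \<and> ty < t' \<and> ty + f a = t' \<and> minw n w f x y ty)
          = (y < n \<and> w y u = Some a \<and> minw n w f x y ty \<and> t' = ty + f a)" for y a ty
        proof -
          have "f a \<ge> 1" using f1[of j] unfolding f_def by blast
          then show ?thesis by auto
        qed
        show ?thesis unfolding Cst_def by (simp only: eq)
      qed
      finally show ?thesis .
    qed
    have "{x \<in> XH (pn P) (pb P) H. cand P u (inp u) j H x tt \<and> (\<forall>t'<tt. \<not> cand P u (inp u) j H x t')}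
        = {x \<in> Xs P s r. Cst n w f x u tt \<and> (\<forall>t'<tt. \<not> Cst n w f x u t')}"
      using XH candC by auto
    also have "\<dots> = {x \<in> Xs P s r. minw n w f x u tt}"
      using minw_step[OF f1[of j] u] unfolding f_def by simp
    finally have "dial_msg P u (inp u) j tt H = encs (pb P) (sorted_list_of_set {x \<in> Xs P s r. minw n w f x u tt})"
      unfolding dial_msg_def by simp
    then show ?thesis unfolding alg_send_def Mi_def using 3
      unfolding j_def tt_def D_def f_def by simp
  qed
qed

lemma hist_agree:
  assumes "k \<le> rr P"
  shows "run_hist (ALG c) P inp r k t u = (if t < k then Hst P w s r t u else [])"
  using assms
proof (induction k arbitrary: t u)
  case 0 then show ?case by simp
next
  case (Suc k)
  have ag: "\<forall>t'<k. \<forall>y. run_hist (ALG c) P inp r k t' y = Hst P w s r t' y"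
    using Suc by auto
  show ?case
  proof (cases "t = k")
    case True
    show ?thesis
    proof (cases "u < n")
      case un: True
      have "run_hist (ALG c) P inp r (Suc k) t u = alg_send P u (inp u) (r u) k (run_hist (ALG c) P inp r k)"
        using True un by (simp add: ALG_def)
      also have "\<dots> = Mi P w s r k u" using send_correct[OF _ un ag] Suc.prems by simp
      finally show ?thesis using True un Suc.prems unfolding Hst_def by simp
    next
      case False
      have "run_hist (ALG c) P inp r (Suc k) t u = run_hist (ALG c) P inp r k k u"
        using True False by simp
      also have "\<dots> = []" using Suc.IH[of k u] Suc.prems by simp
      finally show ?thesis using True False unfolding Hst_def by simp
    qed
  next
    case False
    then show ?thesis using Suc by auto
  qed
qed

lemma final_hist_eq: "final_hist (ALG c) P inp r = Hst P w s r"
proof (intro ext)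
  fix t u
  have "final_hist (ALG c) P inp r t u = run_hist (ALG c) P inp r (rr P) t u"
    unfolding final_hist_def by (simp add: ALG_def)
  also have "\<dots> = Hst P w s r t u" using hist_agree[of "rr P"] unfolding Hst_def by simp
  finally show "final_hist (ALG c) P inp r t u = Hst P w s r t u" .
qed

end


lemma ws_le_rho: "r > 0 \<Longrightarrow> real (ws (\<lambda>a. a) w p) \<le> r * real (ws (wr r) w p)"
proof (induction p rule: induct_list012)
  case (3 x y z)
  have "real (the (w x y)) \<le> r * real (wr r (the (w x y)))" using wr_lower[OF 3(3)] .
  then show ?case using 3 by (simp add: distrib_left)
qed auto

lemma ws_rho_upper: "r > 0 \<Longrightarrow> r * real (ws (wr r) w p) \<le> real (ws (\<lambda>a. a) w p) + r * real (length p - 1)"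
proof (induction p rule: induct_list012)
  case (3 x y z)
  have "r * real (wr r (the (w x y))) \<le> real (the (w x y)) + r" using wr_upper[OF 3(3)] .
  then show ?case using 3 by (simp add: distrib_left)
qed auto

lemma flo_bound:
  fixes d :: nat and E :: ereal and e e' z :: real
  assumes "ereal (real d) \<le> E" "E \<le> ereal ((1 + e' / 2) * real d + z)" "0 \<le> z" "z < 1 / 2"
    "0 < e'" "e' \<le> e"
  shows "ereal (real d) \<le> flo E \<and> flo E \<le> ereal (1 + e) * ereal (real d)"
proof -
  obtain x where x: "E = ereal x" using assms(1,2) by (cases E) auto
  have dx: "real d \<le> x" "x \<le> (1 + e' / 2) * real d + z" using assms x by auto
  have f: "flo E = ereal (real_of_int \<lfloor>x\<rfloor>)" unfolding flo_def x by simp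
  have lo: "real d \<le> real_of_int \<lfloor>x\<rfloor>"
  proof -
    have "int d \<le> \<lfloor>x\<rfloor>" using dx(1) by (simp add: le_floor_iff)
    then show ?thesis by linarith
  qed
  have hi: "real_of_int \<lfloor>x\<rfloor> \<le> (1 + e) * real d"
  proof (cases "e' * real d \<ge> 1")
    case True
    have "real_of_int \<lfloor>x\<rfloor> \<le> x" by simp
    also have "\<dots> \<le> real d + e' * real d / 2 + z" using dx(2) by (simp add: algebra_simps)
    also have "\<dots> \<le> real d + e' * real d" using True assms(4) by simp
    also have "\<dots> \<le> (1 + e) * real d" using assms(6) by (simp add: algebra_simps mult_right_mono)
    finally show ?thesis .
  next
    case False
    have "x \<le> real d + e' * real d / 2 + z" using dx(2) by (simp add: algebra_simps)
    also have "\<dots> < real d + 1" using False assms(4) by simp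
    finally have "\<lfloor>x\<rfloor> \<le> int d" by (simp add: floor_le_iff)
    then have "real_of_int \<lfloor>x\<rfloor> \<le> real d" by linarith
    also have "\<dots> \<le> (1 + e) * real d"
    proof -
      have "0 \<le> e * real d" using assms(5,6) by simp
      then show ?thesis by (simp add: algebra_simps)
    qed
    finally show ?thesis .
  qed
  show ?thesis using lo hi f by simp
qed

context stp
begin

abbreviation "ep \<equiv> epsm e"

lemma ep: "0 < ep" "ep \<le> 1" "ep \<le> e" unfolding epsm_def using epos by auto

lemma blk_lt: "j \<le> pK P \<Longrightarrow> t \<le> pD P \<Longrightarrow> blk (pD P) j t < rr P"
proof -
  assume a: "j \<le> pK P" "t \<le> pD P"
  have "j * (pD P + 1) \<le> pK P * (pD P + 1)" using a(1) by (rule mult_right_mono) simp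
  then show ?thesis unfolding blk_def rr_def using a(2) by (simp add: algebra_simps)
qed

lemma mem_blk:
  assumes "j \<le> pK P" "t \<le> pD P"
  shows "x \<in> set (decs (pb P) (Hst P w s r (blk (pD P) j t) u)) \<longleftrightarrow>
     u < n \<and> x \<in> Xs P s r \<and> minw n w (wr (prho P j)) x u t"
proof (cases "u < n")
  case True
  have "blk (pD P) j t \<ge> 2" unfolding blk_def by simp
  then show ?thesis using True blk_lt[OF assms] set_Mi[where k="blk (pD P) j t" and y=u and r=r]
      blk_div[OF assms(2)] blk_mod[OF assms(2)]
    unfolding Hst_def by simp
next
  case False then show ?thesis unfolding Hst_def by simp
qed

lemma est_lower: "graph_dist n w x u \<le> estH P (Hst P w s r) x u"
  unfolding estH_def
proof (rule INF_greatest)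
  fix jt assume "jt \<in> {(j, t). j \<le> pK P \<and> t \<le> pD P \<and> x \<in> set (decs (pb P) (Hst P w s r (blk (pD P) j t) u))}"
  then obtain j t where jt: "jt = (j, t)" "j \<le> pK P" "t \<le> pD P"
     "x \<in> set (decs (pb P) (Hst P w s r (blk (pD P) j t) u))" by blast
  then have "minw n w (wr (prho P j)) x u t" using mem_blk by blast
  then obtain q where q: "wpath n w x u q" "ws (wr (prho P j)) w q = t"
    unfolding minw_def reachw_def by blast
  have "graph_dist n w x u \<le> ereal (real (ws (\<lambda>a. a) w q))" using gd_le[OF q(1)] .
  also have "\<dots> \<le> ereal (prho P j * real t)" using ws_le_rho[OF prho_pos, of w q j] q(2) by simp
  finally show "graph_dist n w x u \<le> ereal (prho P (fst jt) * real (snd jt))" using jt by simp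
qed

lemma est_upper:
  assumes "j \<le> pK P" "t0 \<le> pD P" "x \<in> Xs P s r" "u < n" "reachw n w (wr (prho P j)) x u t0"
  shows "estH P (Hst P w s r) x u \<le> ereal (prho P j * real t0)"
proof -
  obtain t where t: "t \<le> t0" "minw n w (wr (prho P j)) x u t" using minw_ex[OF assms(5)] by blast
  have "(j, t) \<in> {(j, t). j \<le> pK P \<and> t \<le> pD P \<and> x \<in> set (decs (pb P) (Hst P w s r (blk (pD P) j t) u))}"
    using mem_blk[of j t x r u] assms t by simp
  then have "estH P (Hst P w s r) x u \<le> ereal (prho P j * real t)"
    unfolding estH_def by (rule INF_lower2) simp
  also have "\<dots> \<le> ereal (prho P j * real t0)" using t(1) prho_pos[of j]
    by (simp add: mult_left_mono)
  finally show ?thesis .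
qed

lemma hw_lower: "q \<noteq> [] \<Longrightarrow> last q < n \<Longrightarrow> graph_dist n w (hd q) (last q) \<le> hw (estH P (Hst P w s r)) q"
proof (induction q rule: induct_list012)
  case (2 x)
  have "wpath n w x x [x]" using 2 unfolding wpath_def by simp
  from gd_le[OF this] show ?case by (simp add: zero_ereal_def)
next
  case (3 x y z)
  have "graph_dist n w x (last (y # z)) \<le> graph_dist n w x y + graph_dist n w y (last (y # z))"
    by (rule gd_triangle)
  also have "\<dots> \<le> estH P (Hst P w s r) x y + hw (estH P (Hst P w s r)) (y # z)"
    using 3 est_lower by (intro add_mono) auto
  finally show ?case by simp
qed simp

end


context stp
begin

lemma D_ge: "4 * real h / ep + real h \<le> real (pD P)"
proof -
  have "4 * real h / ep \<ge> 0" using ep by simp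
  then have "4 * real h / ep \<le> real (nat \<lceil>4 * real h / ep\<rceil>)" by linarith
  then show ?thesis unfolding pD_def DD_def by simp
qed

lemma h_le_D: "h \<le> pD P" unfolding pD_def DD_def by simp

lemma segb:
  assumes q: "wpath n w x u q" and xX: "x \<in> Xs P s r" and hql: "length q - 1 \<le> h"
    and dK: "ws (\<lambda>a. a) w q < 2 ^ pK P"
  shows "estH P (Hst P w s r) x u \<le>
     ereal ((1 + ep / 2) * real (ws (\<lambda>a. a) w q) + real (length q - 1) / (2 * real n))"
proof -
  define d where "d = ws (\<lambda>a. a) w q"
  define hq where "hq = length q - 1"
  have qne: "q \<noteq> []" using q unfolding wpath_def by auto
  have un: "u < n"
  proof -
    have "last q \<in> set q" using qne by simp
    then show ?thesis using q wk_set[of n w q] unfolding wpath_def by auto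
  qed
  have hqh: "hq \<le> h" using hql unfolding hq_def .
  have npos: "real n > 0" using n1 by simp
  have hpos: "real h > 0" using h1 by simp
  show ?thesis
  proof (cases "d = 0")
    case True
    let ?r = "prho P 0"
    define t0 where "t0 = ws (wr ?r) w q"
    have reach: "reachw n w (wr ?r) x u t0" unfolding reachw_def t0_def using q by blast
    have r0: "?r = 1 / (2 * real n)" unfolding prho_def rho_def by simp
    have up: "?r * real t0 \<le> real d + ?r * real hq"
      using ws_rho_upper[OF prho_pos[of 0], of w q] unfolding t0_def d_def hq_def .
    then have "?r * real t0 \<le> ?r * real hq" using True by simp
    then have "real t0 \<le> real hq" using prho_pos[of 0] by simp
    then have t0D: "t0 \<le> pD P" using hqh h_le_D by simp
    have "estH P (Hst P w s r) x u \<le> ereal (?r * real t0)"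
      using est_upper[OF _ t0D xX un reach] by simp
    also have "\<dots> \<le> ereal (real hq / (2 * real n))" using up True r0 by simp
    finally show ?thesis using True unfolding d_def hq_def by simp
  next
    case False
    define j where "j = (LEAST j. d < 2 ^ j)"
    have dj: "d < 2 ^ j" unfolding j_def using dK unfolding d_def[symmetric] by (rule LeastI)
    have jK: "j \<le> pK P" unfolding j_def using dK unfolding d_def[symmetric] by (rule Least_le)
    have j0: "j \<noteq> 0"
    proof
      assume "j = 0" then show False using dj False by simp
    qed
    have dj': "2 ^ (j - 1) \<le> d"
    proof -
      have "j - 1 < j" using j0 by simp
      then have "\<not> d < 2 ^ (j - 1)" unfolding j_def by (rule not_less_Least[folded j_def])
      then show ?thesis by simp
    qed
    define a :: real where "a = 2 ^ (j - 1)"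
    have a2: "real d < 2 * a"
    proof -
      have "(2::nat) ^ j = 2 * 2 ^ (j - 1)" using j0 by (metis power_eq_if)
      then have "d < 2 * 2 ^ (j - 1)" using dj by simp
      then show ?thesis unfolding a_def by (metis of_nat_less_iff of_nat_mult of_nat_numeral of_nat_power)
    qed
    have ad: "a \<le> real d" unfolding a_def using dj' by (metis of_nat_le_iff of_nat_numeral of_nat_power)
    have apos: "a > 0" unfolding a_def by simp
    let ?r = "prho P j"
    have rj: "?r = ep * a / (2 * real h)" unfolding prho_def rho_def a_def using j0 by simp
    have rpos: "?r > 0" using prho_pos .
    define t0 where "t0 = ws (wr ?r) w q"
    have reach: "reachw n w (wr ?r) x u t0" unfolding reachw_def t0_def using q by blast
    have up: "?r * real t0 \<le> real d + ?r * real hq"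
      using ws_rho_upper[OF rpos, of w q] unfolding t0_def d_def hq_def .
    have rh: "?r * real hq \<le> ep * real d / 2"
    proof -
      have "?r * real hq \<le> ?r * real h" using hqh rpos by (simp add: mult_left_mono)
      also have "\<dots> = ep * a / 2" using rj hpos by (simp add: field_simps)
      also have "\<dots> \<le> ep * real d / 2" using ad ep by (simp add: mult_left_mono)
      finally show ?thesis .
    qed
    have t0D: "t0 \<le> pD P"
    proof -
      have "real t0 \<le> (real d + ?r * real hq) / ?r" using up rpos by (simp add: pos_le_divide_eq mult.commute)
      also have "\<dots> = real d / ?r + real hq" using rpos by (simp add: field_simps)
      also have "real d / ?r \<le> 4 * real h / ep"
      proof -
        have "4 * real h / ep * ?r = 2 * a" using rj ep hpos by (simp add: field_simps)
        then show ?thesis using a2 rpos by (simp add: pos_divide_le_eq)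
      qed
      then have "real d / ?r + real hq \<le> 4 * real h / ep + real h" using hqh by simp
      also have "\<dots> \<le> real (pD P)" by (rule D_ge)
      finally show ?thesis by simp
    qed
    have "estH P (Hst P w s r) x u \<le> ereal (?r * real t0)"
      using est_upper[OF jK t0D xX un reach] .
    also have "\<dots> \<le> ereal ((1 + ep / 2) * real d + real hq / (2 * real n))"
    proof -
      have "?r * real t0 \<le> real d + ep * real d / 2" using up rh by simp
      also have "\<dots> \<le> (1 + ep / 2) * real d + real hq / (2 * real n)" using npos by (simp add: algebra_simps)
      finally show ?thesis by simp
    qed
    finally show ?thesis unfolding d_def hq_def .
  qed
qed

end


context stp
begin

lemma drop_wpath:
  assumes "wpath n w s v p" "i < length p"
  shows "wpath n w (p ! i) v (drop i p)"
proof -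
  have "wk n w (drop i p)" using split_walk[of n w p i] assms unfolding wpath_def by blast
  moreover have "hd (drop i p) = p ! i" using assms(2) by (simp add: hd_drop_conv_nth)
  moreover have "last (drop i p) = v" using assms unfolding wpath_def by (simp add: last_drop)
  ultimately show ?thesis unfolding wpath_def by simp
qed

lemma path_claim:
  assumes p: "wpath n w s v p" "distinct p" and Wb: "\<forall>u<n. \<forall>v<n. \<forall>x. w u v = Some x \<longrightarrow> x \<le> W"
    and hit: "\<forall>i. i + h < length p \<longrightarrow> (\<exists>j. i < j \<and> j \<le> i + h \<and> p ! j \<in> Xs P s r)"
    and i: "i < length p" "p ! i \<in> Xs P s r"
  shows "\<exists>q. q \<noteq> [] \<and> hd q = p ! i \<and> last q = v \<and>
     hw (estH P (Hst P w s r)) q \<le> ereal ((1 + ep / 2) * real (ws (\<lambda>a. a) w (drop i p)) + real (length p - 1 - i) / (2 * real n))"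
  using i
proof (induction "length p - i" arbitrary: i rule: less_induct)
  case less
  let ?E = "estH P (Hst P w s r)"
  have wkp: "wk n w p" using p unfolding wpath_def by simp
  have Ln: "length p \<le> n" using wk_length_distinct[OF wkp p(2)] .
  have wsK: "ws (\<lambda>a. a) w p < 2 ^ pK P"
  proof -
    have "ws (\<lambda>a. a) w p \<le> (length p - 1) * W" using ws_bound[OF wkp Wb] .
    also have "\<dots> \<le> n * W" using Ln by (intro mult_right_mono) auto
    also have "\<dots> < 2 ^ pK P" unfolding pK_def using KK by simp
    finally show ?thesis .
  qed
  have dropK: "ws (\<lambda>a. a) w (drop k p) < 2 ^ pK P" if "k < length p" for k
    using split_walk[OF wkp that, of "\<lambda>a. a"] wsK by linarith
  have dw: "wpath n w (p ! i) v (drop i p)" using drop_wpath[OF p(1) less.prems(1)] .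
  show ?case
  proof (cases "length p - 1 - i \<le> h")
    case True
    have "?E (p ! i) v \<le> ereal ((1 + ep / 2) * real (ws (\<lambda>a. a) w (drop i p)) + real (length (drop i p) - 1) / (2 * real n))"
      by (rule segb[OF dw less.prems(2)]) (use True dropK less.prems in auto)
    then have "hw ?E [p ! i, v] \<le> ereal ((1 + ep / 2) * real (ws (\<lambda>a. a) w (drop i p)) + real (length p - 1 - i) / (2 * real n))"
      by (simp add: add.commute diff_commute)
    then show ?thesis by (intro exI[of _ "[p ! i, v]"]) simp
  next
    case False
    then have ih: "i + h < length p" by simp
    then obtain j where j: "i < j" "j \<le> i + h" "p ! j \<in> Xs P s r" using hit by blast
    have jL: "j < length p" using j ih by simp
    have lt: "length p - j < length p - i" using jL j by simp
    obtain q' where q': "q' \<noteq> []" "hd q' = p ! j" "last q' = v"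
      "hw ?E q' \<le> ereal ((1 + ep / 2) * real (ws (\<lambda>a. a) w (drop j p)) + real (length p - 1 - j) / (2 * real n))"
      using less.hyps[OF lt jL j(3)] by blast
    define k where "k = j - i"
    have kl: "k < length (drop i p)" using jL j unfolding k_def by simp
    have sw: "wk n w (take (Suc k) (drop i p)) \<and> wk n w (drop k (drop i p)) \<and>
      ws (\<lambda>a. a) w (drop i p) = ws (\<lambda>a. a) w (take (Suc k) (drop i p)) + ws (\<lambda>a. a) w (drop k (drop i p))"
      using split_walk[OF _ kl] dw unfolding wpath_def by blast
    have ddj: "drop k (drop i p) = drop j p" unfolding k_def using j by simp
    let ?seg = "take (Suc k) (drop i p)"
    have hs: "hd ?seg = p ! i" using less.prems(1) by (simp add: hd_drop_conv_nth)
    have ls: "last ?seg = p ! j" using kl j unfolding k_def by (simp add: take_Suc_conv_app_nth)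
    have wseg: "wpath n w (p ! i) (p ! j) ?seg" using sw hs ls unfolding wpath_def by simp
    have segl: "length ?seg - 1 = k" using kl by simp
    have segK: "ws (\<lambda>a. a) w ?seg < 2 ^ pK P" using sw dropK[OF less.prems(1)] by linarith
    have e1: "?E (p ! i) (p ! j) \<le> ereal ((1 + ep / 2) * real (ws (\<lambda>a. a) w ?seg) + real k / (2 * real n))"
      using segb[OF wseg less.prems(2) _ segK] segl j unfolding k_def by simp
    have hwq: "hw ?E (p ! i # q') = ?E (p ! i) (p ! j) + hw ?E q'"
      using q'(1,2) by (cases q') auto
    have "hw ?E (p ! i # q') \<le> ereal ((1 + ep / 2) * real (ws (\<lambda>a. a) w ?seg) + real k / (2 * real n))
       + ereal ((1 + ep / 2) * real (ws (\<lambda>a. a) w (drop j p)) + real (length p - 1 - j) / (2 * real n))"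
      unfolding hwq using e1 q'(4) by (rule add_mono)
    also have "\<dots> = ereal ((1 + ep / 2) * real (ws (\<lambda>a. a) w (drop i p)) + real (length p - 1 - i) / (2 * real n))"
    proof -
      have "real k + real (length p - 1 - j) = real (length p - 1 - i)" using j jL unfolding k_def by simp
      then show ?thesis using sw ddj by (simp add: algebra_simps add_divide_distrib[symmetric])
    qed
    finally show ?thesis using q' by (intro exI[of _ "p ! i # q'"]) simp
  qed
qed

end


context stp
begin

definition spath :: "nat \<Rightarrow> nat list" where
  "spath v = (SOME p. wpath n w s v p \<and> distinct p \<and> graph_dist n w s v = ereal (real (ws (\<lambda>a. a) w p)))"

lemma spath:
  assumes "graph_dist n w s v \<noteq> \<infinity>"
  shows "wpath n w s v (spath v) \<and> distinct (spath v) \<and> graph_dist n w s v = ereal (real (ws (\<lambda>a. a) w (spath v)))"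
  unfolding spath_def using gd_shortest[OF assms] by (rule someI_ex)

lemma spath_len: "graph_dist n w s v \<noteq> \<infinity> \<Longrightarrow> length (spath v) \<le> n"
  using spath wk_length_distinct unfolding wpath_def by blast

lemma srcH_Hst: "srcH n (Hst P w s r) = s"
proof -
  have "(y < n \<and> Hst P w s r 0 y \<noteq> []) \<longleftrightarrow> y = s" for y
    using sn R2 unfolding Hst_def Mi_def by auto
  moreover have "(LEAST u. u = s) = s" by (rule Least_equality) auto
  ultimately show ?thesis unfolding srcH_def by simp
qed

lemma est_eq: "estimate (ALG c) P inp r v = flo (hdist (estH P (Hst P w s r)) s v)"
  unfolding estimate_def final_hist_eq by (simp add: ALG_def alg_out_def srcH_Hst)

lemma hdist_lower: "v < n \<Longrightarrow> graph_dist n w s v \<le> hdist (estH P (Hst P w s r)) s v"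
  unfolding hdist_def
proof (rule INF_greatest)
  fix q assume "v < n" "q \<in> {q. q \<noteq> [] \<and> hd q = s \<and> last q = v}"
  then show "graph_dist n w s v \<le> hw (estH P (Hst P w s r)) q" using hw_lower[of q r] by auto
qed

definition hitp :: "(nat \<Rightarrow> bool list) \<Rightarrow> nat list \<Rightarrow> bool" where
  "hitp r p \<longleftrightarrow> (\<forall>i. i + h < length p \<longrightarrow> (\<exists>j. i < j \<and> j \<le> i + h \<and> p ! j \<in> Xs P s r))"

lemma out_correct:
  assumes v: "v < n" and Wb: "\<forall>u<n. \<forall>v<n. \<forall>x. w u v = Some x \<longrightarrow> x \<le> W"
    and hitv: "graph_dist n w s v \<noteq> \<infinity> \<Longrightarrow> hitp r (spath v)"
  shows "graph_dist n w s v \<le> estimate (ALG c) P inp r v \<and>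
         estimate (ALG c) P inp r v \<le> ereal (1 + e) * graph_dist n w s v"
proof (cases "graph_dist n w s v = \<infinity>")
  case True
  then have "hdist (estH P (Hst P w s r)) s v = \<infinity>" using hdist_lower[OF v, of r] by simp
  then have "estimate (ALG c) P inp r v = \<infinity>" unfolding est_eq flo_def by simp
  then show ?thesis using True epos by simp
next
  case False
  define p where "p = spath v"
  have p: "wpath n w s v p" "distinct p" "graph_dist n w s v = ereal (real (ws (\<lambda>a. a) w p))"
    using spath[OF False] unfolding p_def by auto
  have pne: "p \<noteq> []" using p unfolding wpath_def by auto
  have Ln: "length p \<le> n" using spath_len[OF False] unfolding p_def .
  have p0: "p ! 0 = s" using p pne unfolding wpath_def by (simp add: hd_conv_nth)
  have sX: "s \<in> Xs P s r" unfolding Xs_def by simp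
  obtain q where q: "q \<noteq> []" "hd q = s" "last q = v"
    "hw (estH P (Hst P w s r)) q \<le> ereal ((1 + ep / 2) * real (ws (\<lambda>a. a) w p) + real (length p - 1) / (2 * real n))"
    using path_claim[OF p(1,2) Wb _ _, of r 0] hitv[OF False] pne p0 sX unfolding hitp_def p_def[symmetric]
    by auto
  have "hdist (estH P (Hst P w s r)) s v \<le> hw (estH P (Hst P w s r)) q"
    unfolding hdist_def using q by (intro INF_lower) auto
  also note q(4)
  finally have up: "hdist (estH P (Hst P w s r)) s v \<le>
      ereal ((1 + ep / 2) * real (ws (\<lambda>a. a) w p) + real (length p - 1) / (2 * real n))" .
  have lo: "ereal (real (ws (\<lambda>a. a) w p)) \<le> hdist (estH P (Hst P w s r)) s v"
    using hdist_lower[OF v, of r] p(3) by simp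
  have z: "real (length p - 1) / (2 * real n) < 1 / 2"
  proof -
    have "real (length p - 1) < real n" using Ln pne by (cases p) auto
    then show ?thesis using n1 by (simp add: field_simps)
  qed
  have "ereal (real (ws (\<lambda>a. a) w p)) \<le> flo (hdist (estH P (Hst P w s r)) s v) \<and>
        flo (hdist (estH P (Hst P w s r)) s v) \<le> ereal (1 + e) * ereal (real (ws (\<lambda>a. a) w p))"
    by (rule flo_bound[OF lo up _ z ep(1) ep(3)]) simp
  then show ?thesis unfolding est_eq p(3) by simp
qed

end


context stp
begin

abbreviation "LL \<equiv> mm c n h * pb P"

lemma r0_len: "r \<in> coin_space n LL \<Longrightarrow> length (r 0) = LL"
  unfolding coin_space_def using n1 by auto

lemma card_Xs: "r \<in> coin_space n LL \<Longrightarrow> card (Xs P s r) \<le> mm c n h + 1"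
proof -
  assume r: "r \<in> coin_space n LL"
  have "card {x \<in> set (decs (pb P) (r 0)). x < n} \<le> card (set (decs (pb P) (r 0)))"
    by (rule card_mono) auto
  also have "\<dots> \<le> length (decs (pb P) (r 0))" by (rule card_length)
  also have "\<dots> = mm c n h" unfolding length_decs r0_len[OF r] using b_pos by simp
  finally have "card {x \<in> set (decs (pb P) (r 0)). x < n} \<le> mm c n h" .
  moreover have "card (insert s {x \<in> set (decs (pb P) (r 0)). x < n}) \<le> Suc (card {x \<in> set (decs (pb P) (r 0)). x < n})"
    using card_insert_if[of "{x \<in> set (decs (pb P) (r 0)). x < n}" s] by simp
  ultimately show ?thesis unfolding Xs_def by simp
qed

lemma sum_minw:
  "(\<Sum>tt\<le>pD P. card {x \<in> Xs P s r. minw n w f x u tt}) \<le> card (Xs P s r)"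
proof -
  have "(\<Sum>tt\<le>pD P. card {x \<in> Xs P s r. minw n w f x u tt})
      = (\<Sum>tt\<le>pD P. \<Sum>x\<in>Xs P s r. of_bool (minw n w f x u tt))"
    using Xs_fin by (simp add: sum.If_cases Int_def)
  also have "\<dots> = (\<Sum>x\<in>Xs P s r. \<Sum>tt\<le>pD P. of_bool (minw n w f x u tt))"
    by (rule sum.swap)
  also have "\<dots> \<le> (\<Sum>x\<in>Xs P s r. 1)"
  proof (rule sum_mono)
    fix x
    have "(\<Sum>tt\<le>pD P. of_bool (minw n w f x u tt) :: nat) = card {tt \<in> {..pD P}. minw n w f x u tt}"
      by (simp add: sum.If_cases Int_def)
    also have "\<dots> \<le> 1"
    proof (cases "\<exists>t. minw n w f x u t")
      case True
      then obtain t where "minw n w f x u t" by blast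
      then have "{tt \<in> {..pD P}. minw n w f x u tt} \<subseteq> {t}" using minw_unique by blast
      then show ?thesis using card_mono[of "{t}"] by fastforce
    next
      case False then show ?thesis by simp
    qed
    finally show "(\<Sum>tt\<le>pD P. of_bool (minw n w f x u tt) :: nat) \<le> 1" .
  qed
  finally show ?thesis by simp
qed

lemma rounds_split:
  "{..<rr P} = {0, 1} \<union> (\<lambda>(j, tt). blk (pD P) j tt) ` ({..pK P} \<times> {..pD P})"
proof -
  have "t \<in> (\<lambda>(j, tt). blk (pD P) j tt) ` ({..pK P} \<times> {..pD P})" if "2 \<le> t" "t < rr P" for t
  proof -
    define D where "D = pD P"
    define j where "j = (t - 2) div (D + 1)"
    define tt where "tt = (t - 2) mod (D + 1)"
    have e: "t - 2 = j * (D + 1) + tt" unfolding j_def tt_def by (simp only: div_mult_mod_eq)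
    have "tt \<le> D" unfolding tt_def using mod_less_divisor[of "D + 1" "t - 2"] by simp
    moreover have "j \<le> pK P"
    proof -
      have "t - 2 < (pK P + 1) * (D + 1)" using that unfolding rr_def D_def by simp
      then have "j < pK P + 1" unfolding j_def by (simp add: less_mult_imp_div_less)
      then show ?thesis by simp
    qed
    moreover have "t = blk D j tt" unfolding blk_def using e that by simp
    ultimately show ?thesis unfolding D_def by (intro image_eqI[where x="(j, tt)"]) auto
  qed
  note F = this
  have A: "{..<rr P} \<subseteq> {0, 1} \<union> (\<lambda>(j, tt). blk (pD P) j tt) ` ({..pK P} \<times> {..pD P})"
  proof
    fix t assume t: "t \<in> {..<rr P}"
    show "t \<in> {0, 1} \<union> (\<lambda>(j, tt). blk (pD P) j tt) ` ({..pK P} \<times> {..pD P})"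
    proof (cases "t < 2")
      case True then have "t = 0 \<or> t = 1" by auto
      then show ?thesis by blast
    next
      case False then show ?thesis using F[of t] t by simp
    qed
  qed
  have B: "(\<lambda>(j, tt). blk (pD P) j tt) ` ({..pK P} \<times> {..pD P}) \<subseteq> {..<rr P}"
    using blk_lt by auto
  have C: "{0, 1} \<subseteq> {..<rr P}" using R2 by auto
  show ?thesis using A B C by blast
qed

lemma blk_inj: "inj_on (\<lambda>(j, tt). blk (pD P) j tt) ({..pK P} \<times> {..pD P})"
proof (rule inj_onI)
  fix a b assume A: "a \<in> {..pK P} \<times> {..pD P}" and B: "b \<in> {..pK P} \<times> {..pD P}"
    and E: "(\<lambda>(j, tt). blk (pD P) j tt) a = (\<lambda>(j, tt). blk (pD P) j tt) b"
  then show "a = b"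
  proof (cases a, cases b)
    fix j1 t1 j2 t2 assume ab: "a = (j1, t1)" "b = (j2, t2)"
    then have "t1 \<le> pD P" "t2 \<le> pD P" "blk (pD P) j1 t1 = blk (pD P) j2 t2"
      using A B E by auto
    note X = this
    have "j1 = (blk (pD P) j1 t1 - 2) div (pD P + 1)" using blk_div[OF X(1)] by simp
    also have "\<dots> = (blk (pD P) j2 t2 - 2) div (pD P + 1)" using X(3) by simp
    also have "\<dots> = j2" using blk_div[OF X(2)] by simp
    finally have "j1 = j2" .
    have "t1 = (blk (pD P) j1 t1 - 2) mod (pD P + 1)" using blk_mod[OF X(1)] by simp
    also have "\<dots> = (blk (pD P) j2 t2 - 2) mod (pD P + 1)" using X(3) by simp
    also have "\<dots> = t2" using blk_mod[OF X(2)] by simp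
    finally have "t1 = t2" .
    then show ?thesis using ab \<open>j1 = j2\<close> by simp
  qed
qed

lemma bits_bound:
  assumes r: "r \<in> coin_space n LL"
  shows "total_msg_size (ALG c) P inp r \<le> 1 + LL + (pK P + 1) * (n * (pb P * (mm c n h + 1)))"
proof -
  define g where "g t = (\<Sum>u<n. length (Hst P w s r t u))" for t
  have tm: "total_msg_size (ALG c) P inp r = (\<Sum>t<rr P. g t)"
    unfolding total_msg_size_def final_hist_eq g_def by (simp add: ALG_def)
  have g0: "g 0 = 1"
  proof -
    have "g 0 = (\<Sum>u<n. if u = s then 1 else 0)" unfolding g_def Hst_def Mi_def using R2
      by (intro sum.cong) auto
    also have "\<dots> = 1" using sn by simp
    finally show ?thesis .
  qed
  have g1: "g 1 = LL"
  proof -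
    have "g 1 = (\<Sum>u<n. if u = 0 then LL else 0)" unfolding g_def Hst_def Mi_def using R2 r0_len[OF r]
      by (intro sum.cong) auto
    also have "\<dots> = LL" using n1 by simp
    finally show ?thesis .
  qed
  have gb: "g (blk (pD P) j tt) = (\<Sum>u<n. pb P * card {x \<in> Xs P s r. minw n w (wr (prho P j)) x u tt})"
    if "j \<le> pK P" "tt \<le> pD P" for j tt
  proof -
    have "blk (pD P) j tt \<ge> 2" unfolding blk_def by simp
    then show ?thesis unfolding g_def Hst_def Mi_def using blk_lt[OF that] blk_div[OF that(2)] blk_mod[OF that(2)]
      by (intro sum.cong) (auto simp: length_encs)
  qed
  have disj: "{0, 1} \<inter> (\<lambda>(j, tt). blk (pD P) j tt) ` ({..pK P} \<times> {..pD P}) = {}"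
    unfolding blk_def by auto
  have "(\<Sum>t<rr P. g t) = g 0 + g 1 + (\<Sum>t\<in>(\<lambda>(j, tt). blk (pD P) j tt) ` ({..pK P} \<times> {..pD P}). g t)"
    unfolding rounds_split by (subst sum.union_disjoint) (use disj in auto)
  also have "(\<Sum>t\<in>(\<lambda>(j, tt). blk (pD P) j tt) ` ({..pK P} \<times> {..pD P}). g t)
      = (\<Sum>(j, tt)\<in>{..pK P} \<times> {..pD P}. g (blk (pD P) j tt))"
    by (subst sum.reindex[OF blk_inj]) (simp add: case_prod_unfold)
  also have "\<dots> = (\<Sum>j\<le>pK P. \<Sum>tt\<le>pD P. g (blk (pD P) j tt))"
    by (rule sum.cartesian_product[symmetric])
  also have "\<dots> \<le> (\<Sum>j\<le>pK P. n * (pb P * (mm c n h + 1)))"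
  proof (rule sum_mono)
    fix j assume j: "j \<in> {..pK P}"
    have "(\<Sum>tt\<le>pD P. g (blk (pD P) j tt))
       = (\<Sum>tt\<le>pD P. \<Sum>u<n. pb P * card {x \<in> Xs P s r. minw n w (wr (prho P j)) x u tt})"
      using gb j by (intro sum.cong) auto
    also have "\<dots> = (\<Sum>u<n. pb P * (\<Sum>tt\<le>pD P. card {x \<in> Xs P s r. minw n w (wr (prho P j)) x u tt}))"
      by (subst sum.swap) (simp add: sum_distrib_left)
    also have "\<dots> \<le> (\<Sum>u<n. pb P * (mm c n h + 1))"
      using sum_minw card_Xs[OF r] by (intro sum_mono mult_left_mono) (meson le_trans, simp)
    also have "\<dots> = n * (pb P * (mm c n h + 1))" by simp
    finally show "(\<Sum>tt\<le>pD P. g (blk (pD P) j tt)) \<le> n * (pb P * (mm c n h + 1))" .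
  qed
  also have "\<dots> = (pK P + 1) * (n * (pb P * (mm c n h + 1)))" by simp
  finally show ?thesis unfolding tm g0 g1 by simp
qed

end


lemma coin_fin: "finite (coin_space n L)"
proof -
  let ?F = "\<lambda>f v. if v < n then f v else ([] :: bool list)"
  have "coin_space n L \<subseteq> ?F ` (PiE {..<n} (\<lambda>_. {l. set l \<subseteq> UNIV \<and> length l = L}))"
  proof
    fix r assume r: "r \<in> coin_space n L"
    have "r = ?F (restrict r {..<n})" using r unfolding coin_space_def by (auto simp: fun_eq_iff)
    moreover have "restrict r {..<n} \<in> PiE {..<n} (\<lambda>_. {l. set l \<subseteq> UNIV \<and> length l = L})"
      using r unfolding coin_space_def by auto
    ultimately show "r \<in> ?F ` (PiE {..<n} (\<lambda>_. {l. set l \<subseteq> UNIV \<and> length l = L}))" by blast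
  qed
  moreover have "finite (PiE {..<n} (\<lambda>_. {l::bool list. set l \<subseteq> UNIV \<and> length l = L}))"
    by (intro finite_PiE) (simp_all add: finite_list_length)
  ultimately show ?thesis using finite_subset by blast
qed

definition S0 :: "nat \<Rightarrow> nat \<Rightarrow> (nat \<Rightarrow> bool list) set" where
  "S0 n L = {r \<in> coin_space n L. r 0 = replicate L False}"

lemma card_split:
  assumes n: "n \<ge> 1"
  shows "card (coin_space n L \<inter> {r. Q (r 0)}) = card {l. length l = L \<and> Q l} * card (S0 n L)"
proof -
  let ?z = "replicate L False"
  let ?f = "\<lambda>r. (r 0, r(0 := ?z))"
  let ?g = "\<lambda>(l, r'). r'(0 := l)"
  have "bij_betw ?f (coin_space n L \<inter> {r. Q (r 0)}) ({l. length l = L \<and> Q l} \<times> S0 n L)"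
  proof (rule bij_betw_byWitness[where f'="?g"])
    show "\<forall>a\<in>coin_space n L \<inter> {r. Q (r 0)}. ?g (?f a) = a" by auto
    show "\<forall>a'\<in>{l. length l = L \<and> Q l} \<times> S0 n L. ?f (?g a') = a'" unfolding S0_def by auto
    show "?f ` (coin_space n L \<inter> {r. Q (r 0)}) \<subseteq> {l. length l = L \<and> Q l} \<times> S0 n L"
      using n unfolding S0_def coin_space_def by auto
    show "?g ` ({l. length l = L \<and> Q l} \<times> S0 n L) \<subseteq> coin_space n L \<inter> {r. Q (r 0)}"
      using n unfolding S0_def coin_space_def by auto
  qed
  then have "card (coin_space n L \<inter> {r. Q (r 0)}) = card ({l. length l = L \<and> Q l} \<times> S0 n L)"
    by (rule bij_betw_same_card)
  then show ?thesis by (simp add: card_cartesian_product)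
qed

lemma card_lists_bool: "card {l :: bool list. length l = L} = 2 ^ L"
  using card_lists_length_eq[of "UNIV :: bool set" L] by simp

lemma S0_pos: "n \<ge> 1 \<Longrightarrow> card (S0 n L) > 0"
proof -
  assume n: "n \<ge> 1"
  have "(\<lambda>v. if v < n then replicate L False else []) \<in> S0 n L"
    using n unfolding S0_def coin_space_def by auto
  moreover have "finite (S0 n L)" using coin_fin[of n L] unfolding S0_def by simp
  ultimately show ?thesis using card_gt_0_iff by blast
qed

lemma ratio:
  assumes n: "n \<ge> 1"
  shows "real (card (coin_space n L \<inter> {r. Q (r 0)})) / real (card (coin_space n L))
       = real (card {l. length l = L \<and> Q l}) / 2 ^ L"
proof -
  have a: "card (coin_space n L \<inter> {r. Q (r 0)}) = card {l. length l = L \<and> Q l} * card (S0 n L)"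
    by (rule card_split[OF n])
  have b: "card (coin_space n L) = 2 ^ L * card (S0 n L)"
    using card_split[OF n, where Q="\<lambda>_. True" and L=L] card_lists_bool[of L] by simp
  show ?thesis unfolding a b using S0_pos[OF n, of L] by (simp add: field_simps)
qed

lemma card_append_prod:
  "card {l. length l = p + q \<and> A (take p l) \<and> B (drop p l)} =
   card {a. length a = p \<and> A a} * card {c. length c = q \<and> B c}"
proof -
  have "bij_betw (\<lambda>(a, c). a @ c) ({a. length a = p \<and> A a} \<times> {c. length c = q \<and> B c})
      {l. length l = p + q \<and> A (take p l) \<and> B (drop p l)}"
  proof (rule bij_betw_byWitness[where f'="\<lambda>l. (take p l, drop p l)"])
  qed auto
  then have "card ({a. length a = p \<and> A a} \<times> {c. length c = q \<and> B c}) =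
      card {l. length l = p + q \<and> A (take p l) \<and> B (drop p l)}" by (rule bij_betw_same_card)
  then show ?thesis by (simp add: card_cartesian_product)
qed

lemma card_dec_in:
  assumes "T \<subseteq> {..<2 ^ b}"
  shows "card {a. length a = b \<and> dec a \<in> T} = card T"
proof -
  have "bij_betw dec {a. length a = b \<and> dec a \<in> T} T"
  proof (rule bij_betw_byWitness[where f'="enc b"])
    show "\<forall>a\<in>{a. length a = b \<and> dec a \<in> T}. enc b (dec a) = a" using enc_dec by blast
    show "\<forall>a'\<in>T. dec (enc b a') = a'" using assms by (auto simp: dec_enc)
    show "dec ` {a. length a = b \<and> dec a \<in> T} \<subseteq> T" by auto
    show "enc b ` T \<subseteq> {a. length a = b \<and> dec a \<in> T}" using assms by (auto simp: dec_enc)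
  qed
  then show ?thesis by (rule bij_betw_same_card)
qed

lemma card_dec_notin:
  assumes "T \<subseteq> {..<2 ^ b}"
  shows "card {a. length a = b \<and> dec a \<notin> T} = 2 ^ b - card T"
proof -
  have "{a. length a = b \<and> dec a \<notin> T} = {a. length a = b} - {a. length a = b \<and> dec a \<in> T}" by auto
  moreover have "finite {a :: bool list. length a = b}" by (rule finite_list_length)
  moreover have finB: "finite {a :: bool list. length a = b \<and> dec a \<in> T}"
    by (rule finite_subset[OF _ finite_list_length[of b]]) auto
  moreover have "card ({a :: bool list. length a = b} - {a. length a = b \<and> dec a \<in> T}) =
     card {a :: bool list. length a = b} - card {a. length a = b \<and> dec a \<in> T}"
    by (rule card_Diff_subset[OF finB]) auto
  ultimately have "card {a. length a = b \<and> dec a \<notin> T} = card {a :: bool list. length a = b} - card {a. length a = b \<and> dec a \<in> T}"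
    by simp
  then show ?thesis using card_dec_in[OF assms] card_lists_bool by simp
qed

lemma card_G:
  assumes T: "T \<subseteq> {..<2 ^ b}" and b: "b > 0"
  shows "card {l. length l = m * b \<and> (\<forall>x\<in>set (decs b l). x \<notin> T)} = (2 ^ b - card T) ^ m"
proof (induction m)
  case 0
  have "{l :: bool list. length l = 0 * b \<and> (\<forall>x\<in>set (decs b l). x \<notin> T)} = {[]}" by auto
  then show ?case by simp
next
  case (Suc m)
  have "{l. length l = Suc m * b \<and> (\<forall>x\<in>set (decs b l). x \<notin> T)} =
        {l. length l = b + m * b \<and> dec (take b l) \<notin> T \<and> (\<forall>x\<in>set (decs b (drop b l)). x \<notin> T)}"
  proof (intro Collect_cong iffI)
    fix l :: "bool list"
    assume l: "length l = Suc m * b \<and> (\<forall>x\<in>set (decs b l). x \<notin> T)"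
    have "decs b l = dec (take b l) # decs b (drop b l)"
      using decs_app[of "take b l" b "drop b l"] l b by simp
    then show "length l = b + m * b \<and> dec (take b l) \<notin> T \<and> (\<forall>x\<in>set (decs b (drop b l)). x \<notin> T)"
      using l by simp
  next
    fix l :: "bool list"
    assume l: "length l = b + m * b \<and> dec (take b l) \<notin> T \<and> (\<forall>x\<in>set (decs b (drop b l)). x \<notin> T)"
    have "decs b l = dec (take b l) # decs b (drop b l)"
      using decs_app[of "take b l" b "drop b l"] l b by simp
    then show "length l = Suc m * b \<and> (\<forall>x\<in>set (decs b l). x \<notin> T)" using l by simp
  qed
  also have "card \<dots> = card {a. length a = b \<and> dec a \<notin> T} * card {c. length c = m * b \<and> (\<forall>x\<in>set (decs b c). x \<notin> T)}"
    by (rule card_append_prod)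
  also have "\<dots> = (2 ^ b - card T) ^ Suc m" using Suc card_dec_notin[OF T] by simp
  finally show ?case .
qed


lemma Ln1: "n \<ge> 1 \<Longrightarrow> ln (real n + 2) \<ge> 1"
proof -
  assume "n \<ge> 1"
  have "ln (272/100) \<le> ln (real n + 2)" using \<open>n \<ge> 1\<close> by (subst ln_le_cancel_iff) auto
  then show ?thesis using ln_272_gt_1 by linarith
qed

lemma Lw23: "ln (real W + 2) \<ge> 2/3"
proof -
  have "ln 2 \<le> ln (real W + 2)" by (subst ln_le_cancel_iff) auto
  then show ?thesis using ln2_ge_two_thirds by linarith
qed

lemma pow2_ln: "(2::nat) ^ k \<le> x \<Longrightarrow> real k \<le> 3 / 2 * ln (real x)"
proof -
  assume a: "(2::nat) ^ k \<le> x"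
  have "(2::real) ^ k \<le> real x" using a by (metis of_nat_le_iff of_nat_numeral of_nat_power)
  moreover have "(0::real) < 2 ^ k" by simp
  moreover have "(1::nat) \<le> 2 ^ k" by simp
  then have "x \<ge> 1" using a by linarith
  then have "real x > 0" by simp
  ultimately have "ln ((2::real) ^ k) \<le> ln (real x)" by (subst ln_le_cancel_iff) (auto intro: less_le_trans)
  then have "real k * ln 2 \<le> ln (real x)" by (simp add: ln_realpow)
  moreover have "real k * (2/3) \<le> real k * ln 2" using ln2_ge_two_thirds by (intro mult_left_mono) auto
  ultimately show ?thesis by linarith
qed

lemma b_bound: "n \<ge> 1 \<Longrightarrow> real (nb n) \<le> 3 * ln (real n + 2)"
proof -
  assume n: "n \<ge> 1"
  define b where "b = nb n"
  have b0: "b \<noteq> 0" using nb[of n] n unfolding b_def by (cases "nb n") auto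
  have lt: "nb n - 1 < (LEAST b. n < 2 ^ b)" using b0 unfolding b_def nb_def by simp
  have "\<not> n < 2 ^ (b - 1)" using not_less_Least[OF lt] unfolding b_def nb_def .
  then have "2 ^ (b - 1) \<le> n" by simp
  then have "real (b - 1) \<le> 3 / 2 * ln (real n)" by (rule pow2_ln)
  moreover have "ln (real n) \<le> ln (real n + 2)" using n by (subst ln_le_cancel_iff) auto
  moreover have "real b = real (b - 1) + 1" using b0 by simp
  ultimately show ?thesis using Ln1[OF n] unfolding b_def by linarith
qed

lemma K_bound: "n \<ge> 1 \<Longrightarrow> real (KK n W) + 1 \<le> 10 * ln (real n + 2) * ln (real W + 2)"
proof -
  assume n: "n \<ge> 1"
  define Ln where "Ln = ln (real n + 2)"
  define Lw where "Lw = ln (real W + 2)"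
  have L1: "Ln \<ge> 1" using Ln1[OF n] unfolding Ln_def .
  have L2: "Lw \<ge> 2/3" using Lw23 unfolding Lw_def .
  have LL: "Ln * Lw \<ge> 1 * (2/3)" by (rule mult_mono) (use L1 L2 in auto)
  have LL2: "Ln * (2/3) \<le> Ln * Lw" using L2 L1 by (intro mult_left_mono) auto
  have LL3: "1 * Lw \<le> Ln * Lw" using L1 L2 by (intro mult_right_mono) auto
  define K where "K = KK n W"
  show ?thesis
  proof (cases "K = 0")
    case True then show ?thesis using LL unfolding K_def Ln_def Lw_def by simp
  next
    case False
    have lt: "KK n W - 1 < (LEAST K. n * W < 2 ^ K)" using False unfolding K_def KK_def by simp
    have "\<not> n * W < 2 ^ (K - 1)" using not_less_Least[OF lt] unfolding K_def KK_def .
    then have nw: "2 ^ (K - 1) \<le> n * W" by simp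
    then have W1: "W \<ge> 1" by (metis less_one mult_0_right not_less one_le_numeral one_le_power le_trans)
    have "real (K - 1) \<le> 3 / 2 * ln (real (n * W))" using nw by (rule pow2_ln)
    also have "ln (real (n * W)) = ln (real n) + ln (real W)" using n W1 by (simp add: ln_mult)
    also have "ln (real n) \<le> Ln" unfolding Ln_def using n by (subst ln_le_cancel_iff) auto
    also have "ln (real W) \<le> Lw" unfolding Lw_def using W1 by (subst ln_le_cancel_iff) auto
    finally have "real (K - 1) \<le> 3 / 2 * (Ln + Lw)" by simp
    then have "real K + 1 \<le> 2 + 3/2 * Ln + 3/2 * Lw" using False by simp
    also have "\<dots> \<le> 10 * Ln * Lw" using LL LL2 LL3 by (simp add: algebra_simps)
    finally show ?thesis unfolding K_def Ln_def Lw_def .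
  qed
qed

lemma D_bound: "h \<ge> 1 \<Longrightarrow> e > 0 \<Longrightarrow> real (DD h e) + 1 \<le> 7 * real h / epsm e"
proof -
  assume h: "h \<ge> 1" and e: "e > 0"
  define ep where "ep = epsm e"
  have ep: "0 < ep" "ep \<le> 1" unfolding ep_def epsm_def using e by auto
  have a: "real (nat \<lceil>4 * real h / ep\<rceil>) \<le> 4 * real h / ep + 1"
  proof -
    have "4 * real h / ep \<ge> 0" using ep by simp
    then show ?thesis by linarith
  qed
  have hh: "real h \<le> real h / ep" using ep h by (simp add: le_divide_eq)
  have one: "1 \<le> real h / ep" using ep h by (simp add: le_divide_eq)
  have "real (DD h e) + 1 \<le> 4 * real h / ep + 1 + real h + 1" using a unfolding DD_def ep_def by simp
  also have "\<dots> \<le> 7 * real h / ep"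
  proof -
    have "7 * real h / ep = 4 * real h / ep + real h / ep + 2 * (real h / ep)" by (simp add: field_simps)
    then show ?thesis using hh one by linarith
  qed
  finally show ?thesis unfolding ep_def .
qed

lemma m_bound:
  assumes c: "c > 0" and h: "1 \<le> h" "h \<le> n"
  shows "real (mm c n h) + 1 \<le> (2 * c + 6) * real n * ln (real n + 2) / real h"
proof -
  have n: "n \<ge> 1" using h by simp
  define Ln where "Ln = ln (real n + 2)"
  have L1: "Ln \<ge> 1" using Ln1[OF n] unfolding Ln_def .
  have lnn: "ln (real n) \<le> Ln" "0 \<le> ln (real n)" unfolding Ln_def using n by ((subst ln_le_cancel_iff), auto)+
  have hpos: "real h > 0" using h by simp
  have nh: "real n / real h \<ge> 1" using h hpos by (simp add: le_divide_eq)
  have "real (mm c n h) \<le> 2 * (c + 2) * real n * ln (real n) / real h + 1"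
  proof -
    have "2 * (c + 2) * real n * ln (real n) / real h \<ge> 0" using c lnn hpos by simp
    then show ?thesis unfolding mm_def by linarith
  qed
  also have "2 * (c + 2) * real n * ln (real n) / real h \<le> 2 * (c + 2) * real n * Ln / real h"
    using lnn c hpos by (intro divide_right_mono mult_left_mono) auto
  finally have A: "real (mm c n h) + 1 \<le> 2 * (c + 2) * real n * Ln / real h + 2" by simp
  have B: "1 * 1 \<le> (real n / real h) * Ln" by (rule mult_mono) (use nh L1 in auto)
  have C: "2 * (c + 2) * real n * Ln / real h + 2 * ((real n / real h) * Ln) = (2 * c + 6) * real n * Ln / real h"
    using hpos by (simp add: field_simps)
  show ?thesis using A B C unfolding Ln_def[symmetric] by linarith
qed


lemma mult4_mono:
  fixes a a' b b' m m' x :: real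
  assumes "0 \<le> a" "a \<le> a'" "0 \<le> b" "b \<le> b'" "0 \<le> m" "m \<le> m'" "0 \<le> x"
  shows "a * x * b * m \<le> a' * x * b' * m'"
proof -
  have "a * x \<le> a' * x" using assms by (intro mult_right_mono) auto
  then have "a * x * b \<le> a' * x * b'" using assms by (intro mult_mono) auto
  then show ?thesis using assms by (intro mult_mono) auto
qed

context stp
begin

abbreviation "LN \<equiv> ln (real n + 2)"
abbreviation "LW \<equiv> ln (real W + 2)"

lemma Lns: "LN \<ge> 1" "LW \<ge> 2/3" using Ln1[OF n1] Lw23 by auto

lemma hep: "real h / ep \<ge> 1" using ep h1 by (simp add: le_divide_eq)

lemma rounds_ok:
  assumes c: "c > 0"
  shows "real (rr P) \<le> 200 * (c + 3) * LN ^ 3 * (real h * LW / ep)"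
proof -
  have K: "real (pK P) + 1 \<le> 10 * LN * LW" unfolding pK_def using K_bound[OF n1] by simp
  have D: "real (pD P) + 1 \<le> 7 * real h / ep" unfolding pD_def using D_bound[OF h1 epos] by simp
  define X where "X = LN * LW * (real h / ep)"
  have X: "X \<ge> 2/3"
  proof -
    have "1 * (2/3) \<le> LN * LW" by (rule mult_mono) (use Lns in auto)
    then have "(2/3) * 1 \<le> (LN * LW) * (real h / ep)" by (intro mult_mono) (use hep in auto)
    then show ?thesis unfolding X_def by simp
  qed
  have "real (rr P) = 2 + (real (pK P) + 1) * (real (pD P) + 1)" unfolding rr_def by (simp add: algebra_simps)
  also have "(real (pK P) + 1) * (real (pD P) + 1) \<le> (10 * LN * LW) * (7 * real h / ep)"
    using K D by (intro mult_mono) auto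
  also have "(10 * LN * LW) * (7 * real h / ep) = 70 * X" unfolding X_def by simp
  finally have r1: "real (rr P) \<le> 73 * X" using X by linarith
  have "LN ^ 2 \<ge> 1" using Lns by simp
  then have "73 * X \<le> 73 * (LN ^ 2 * X)" using X by (simp add: mult_le_cancel_left1)
  also have "\<dots> \<le> 200 * (c + 3) * (LN ^ 2 * X)" using X c \<open>LN ^ 2 \<ge> 1\<close>
    by (intro mult_right_mono) auto
  also have "\<dots> = 200 * (c + 3) * LN ^ 3 * (real h * LW / ep)" unfolding X_def
    by (simp add: power3_eq_cube power2_eq_square)
  finally show ?thesis using r1 by linarith
qed

lemma bits_ok:
  assumes c: "c > 0" and hn: "h \<le> n" and r: "r \<in> coin_space n LL"
  shows "real (total_msg_size (ALG c) P inp r) \<le> 200 * (c + 3) * LN ^ 3 * (real n ^ 2 * LW / (ep * real h))"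
proof -
  define K where "K = real (pK P) + 1"
  define B where "B = real (pb P)"
  define M where "M = real (mm c n h) + 1"
  have K: "K \<le> 10 * LN * LW" unfolding K_def pK_def using K_bound[OF n1] by simp
  have Bb: "B \<le> 3 * LN" unfolding B_def pb_def using b_bound[OF n1] by simp
  have Mb: "M \<le> (2 * c + 6) * real n * LN / real h" unfolding M_def using m_bound[OF c h1 hn] .
  have B1: "B \<ge> 1" unfolding B_def using b_pos by simp
  have K1: "K \<ge> 1" unfolding K_def by simp
  have M1: "M \<ge> 1" unfolding M_def by simp
  have nn: "real n \<ge> 1" using n1 by simp
  have "real (total_msg_size (ALG c) P inp r) \<le> real (1 + LL + (pK P + 1) * (n * (pb P * (mm c n h + 1))))"
    using bits_bound[OF r] by (simp only: of_nat_le_iff)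
  also have "\<dots> = 1 + real (mm c n h) * B + K * (real n * (B * M))"
    unfolding K_def B_def M_def by (simp add: algebra_simps)
  also have "1 + real (mm c n h) * B \<le> 2 * K * (real n * (B * M))"
  proof -
    have z: "0 \<le> B * real (mm c n h)" using B1 by simp
    have bm: "B * M = B + B * real (mm c n h)" unfolding M_def by (simp add: algebra_simps)
    have cm: "real (mm c n h) * B = B * real (mm c n h)" by (rule mult.commute)
    have "1 + real (mm c n h) * B \<le> B * M + B * M" using z bm B1 cm by linarith
    also have "B * M \<le> K * (real n * (B * M))"
    proof -
      have "1 * 1 \<le> K * real n" by (rule mult_mono) (use K1 nn in auto)
      then have "1 * (B * M) \<le> (K * real n) * (B * M)" using B1 M1 by (intro mult_right_mono) auto
      then show ?thesis by (simp add: algebra_simps)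
    qed
    finally show ?thesis by (simp add: algebra_simps)
  qed
  finally have t1: "real (total_msg_size (ALG c) P inp r) \<le> 3 * (K * real n * B * M)" by (simp add: algebra_simps)
  have "K * real n * B * M \<le> (10 * LN * LW) * real n * (3 * LN) * ((2 * c + 6) * real n * LN / real h)"
    by (rule mult4_mono) (use K Bb Mb K1 B1 M1 in auto)
  also have "\<dots> = 30 * (2 * c + 6) * LN ^ 3 * (real n ^ 2 * LW / real h)"
    using h1 by (simp add: power3_eq_cube power2_eq_square field_simps)
  finally have YZ: "K * real n * B * M \<le> 30 * (2 * c + 6) * (LN ^ 3 * (real n ^ 2 * LW / real h))" by simp
  have e3: "3 * (30 * (2 * c + 6) * (LN ^ 3 * (real n ^ 2 * LW / real h))) = 180 * (c + 3) * LN ^ 3 * (real n ^ 2 * LW / real h)"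
    by (simp add: algebra_simps add_divide_distrib)
  have t2: "real (total_msg_size (ALG c) P inp r) \<le> 180 * (c + 3) * LN ^ 3 * (real n ^ 2 * LW / real h)"
    using t1 YZ e3 by linarith
  have pos: "0 \<le> LN ^ 3 * (real n ^ 2 * LW / real h)" using Lns by simp
  have "180 * (c + 3) * LN ^ 3 * (real n ^ 2 * LW / real h) \<le> 200 * (c + 3) * LN ^ 3 * (real n ^ 2 * LW / real h)"
    using pos c by (intro mult_right_mono) auto
  also have "real n ^ 2 * LW / real h \<le> real n ^ 2 * LW / (ep * real h)"
  proof -
    have "0 \<le> real n ^ 2 * LW" using Lns by simp
    moreover have "ep * real h \<le> real h" using ep h1 by (simp add: mult_le_cancel_right1)
    moreover have "0 < ep * real h" using ep h1 by simp
    ultimately show ?thesis by (intro divide_left_mono) auto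
  qed
  then have "200 * (c + 3) * LN ^ 3 * (real n ^ 2 * LW / real h) \<le> 200 * (c + 3) * LN ^ 3 * (real n ^ 2 * LW / (ep * real h))"
    using c Lns by (intro mult_left_mono) auto
  finally show ?thesis using t2 by linarith
qed

end


context stp
begin

lemma pb_2n: "2 ^ pb P \<le> 2 * n"
proof -
  define b where "b = nb n"
  have b0: "b \<noteq> 0" using nb[of n] n1 unfolding b_def by (cases "nb n") auto
  have lt: "nb n - 1 < (LEAST b. n < 2 ^ b)" using b0 unfolding b_def nb_def by simp
  have "\<not> n < 2 ^ (b - 1)" using not_less_Least[OF lt] unfolding b_def nb_def .
  then have "2 ^ (b - 1) \<le> n" by simp
  moreover have "(2::nat) ^ b = 2 * 2 ^ (b - 1)" using b0 by (metis power_eq_if)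
  ultimately have "2 ^ b \<le> 2 * n" by simp
  then show ?thesis unfolding pb_def b_def by simp
qed

lemma num_bound:
  assumes c: "c > 0" and hn: "h \<le> n"
  shows "real ((2 ^ pb P - h) ^ mm c n h) / 2 ^ LL \<le> real n powr (- (c + 2))"
proof -
  define b where "b = pb P"
  define m where "m = mm c n h"
  have hb: "h \<le> 2 ^ b" using hn n_less_b unfolding b_def by simp
  have b2n: "(2::real) ^ b \<le> 2 * real n" using pb_2n unfolding b_def
    by (metis of_nat_le_iff of_nat_mult of_nat_numeral of_nat_power)
  have bpos: "(0::real) < 2 ^ b" by simp
  have npos: "real n > 0" using n1 by simp
  have hpos: "real h > 0" using h1 by simp
  define q where "q = real h / 2 ^ b"
  have e1: "real ((2 ^ b - h) ^ m) / 2 ^ (m * b) = (1 - q) ^ m"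
  proof -
    have "real ((2 ^ b - h) ^ m) = (2 ^ b - real h) ^ m" using hb by (simp add: of_nat_diff)
    moreover have "(2::real) ^ (m * b) = (2 ^ b) ^ m" by (simp add: power_mult[symmetric] mult.commute)
    moreover have "(2 ^ b - real h) / 2 ^ b = 1 - q" unfolding q_def using bpos by (simp add: field_simps)
    ultimately show ?thesis by (simp add: power_divide[symmetric])
  qed
  have q1: "q \<ge> real h / (2 * real n)" unfolding q_def using b2n hpos bpos npos
    by (intro divide_left_mono) auto
  have q2: "q \<le> 1" unfolding q_def using hb bpos by (simp add: divide_le_eq)
  have "(1 - q) ^ m \<le> exp (- (real h / (2 * real n))) ^ m"
  proof (rule power_mono)
    have "1 - q \<le> 1 - real h / (2 * real n)" using q1 by simp
    also have "\<dots> \<le> exp (- (real h / (2 * real n)))" using exp_ge_add_one_self[of "- (real h / (2 * real n))"] by simp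
    finally show "1 - q \<le> exp (- (real h / (2 * real n)))" .
    show "0 \<le> 1 - q" using q2 by simp
  qed
  also have "\<dots> = exp (real m * (- (real h / (2 * real n))))" by (rule exp_of_nat_mult[symmetric])
  also have "\<dots> \<le> exp (- ((c + 2) * ln (real n)))"
  proof -
    have mm: "real m \<ge> 2 * (c + 2) * real n * ln (real n) / real h"
      unfolding m_def mm_def by linarith
    have "real m * (real h / (2 * real n)) \<ge> 2 * (c + 2) * real n * ln (real n) / real h * (real h / (2 * real n))"
      using mm hpos npos by (intro mult_right_mono) auto
    also have "2 * (c + 2) * real n * ln (real n) / real h * (real h / (2 * real n)) = (c + 2) * ln (real n)"
      using hpos npos by (simp add: field_simps)
    finally show ?thesis by simp
  qed
  also have "\<dots> = real n powr (- (c + 2))" using npos by (simp add: powr_def algebra_simps)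
  finally show ?thesis using e1 unfolding b_def m_def by (simp add: mult.commute)
qed

lemma bad_bound:
  assumes c: "c > 0" and hn: "h \<le> n" and T: "T \<subseteq> {..<n}" "card T = h"
  shows "real (card (coin_space n LL \<inter> {r. \<forall>x\<in>set (decs (pb P) (r 0)). x \<notin> T}))
         \<le> real n powr (- (c + 2)) * real (card (coin_space n LL))"
proof -
  let ?S = "coin_space n LL"
  have T2: "T \<subseteq> {..<2 ^ pb P}" using T n_less_b by auto
  have r: "real (card (?S \<inter> {r. \<forall>x\<in>set (decs (pb P) (r 0)). x \<notin> T})) / real (card ?S)
      = real (card {l. length l = LL \<and> (\<forall>x\<in>set (decs (pb P) l). x \<notin> T)}) / 2 ^ LL"
    using ratio[OF n1, where Q="\<lambda>l. \<forall>x\<in>set (decs (pb P) l). x \<notin> T" and L=LL] by simp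
  also have "\<dots> = real ((2 ^ pb P - h) ^ mm c n h) / 2 ^ LL"
    using card_G[OF T2 b_pos, of "mm c n h"] T(2) by simp
  also have "\<dots> \<le> real n powr (- (c + 2))" by (rule num_bound[OF c hn])
  finally have "real (card (?S \<inter> {r. \<forall>x\<in>set (decs (pb P) (r 0)). x \<notin> T})) / real (card ?S) \<le> real n powr (- (c + 2))" .
  moreover have "real (card ?S) > 0"
  proof -
    have "(\<lambda>v. if v < n then replicate LL False else []) \<in> ?S" unfolding coin_space_def by auto
    then show ?thesis using coin_fin[of n LL] card_gt_0_iff by fastforce
  qed
  ultimately show ?thesis by (simp add: divide_le_eq)
qed

end


context stp
begin

lemma prob_main:
  assumes c: "c > 0" and hn: "h \<le> n" and Wb: "\<forall>u<n. \<forall>v<n. \<forall>x. w u v = Some x \<longrightarrow> x \<le> W"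
  shows "measure_pmf.prob (coins n LL)
     {r. (\<forall>v<n. graph_dist n w s v \<le> estimate (ALG c) P inp r v \<and>
                estimate (ALG c) P inp r v \<le> ereal (1 + e) * graph_dist n w s v) \<and>
         real (total_msg_size (ALG c) P inp r) \<le> 200 * (c + 3) * LN ^ 3 * (real n ^ 2 * LW / (ep * real h))}
     \<ge> 1 - real n powr (- c)"
proof -
  let ?S = "coin_space n LL"
  define E where "E = {r. (\<forall>v<n. graph_dist n w s v \<le> estimate (ALG c) P inp r v \<and>
                estimate (ALG c) P inp r v \<le> ereal (1 + e) * graph_dist n w s v) \<and>
         real (total_msg_size (ALG c) P inp r) \<le> 200 * (c + 3) * LN ^ 3 * (real n ^ 2 * LW / (ep * real h))}"
  define B :: "nat \<Rightarrow> nat \<Rightarrow> (nat \<Rightarrow> bool list) set" where "B v i = (if graph_dist n w s v \<noteq> \<infinity> \<and> i + h < length (spath v)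
      then {r. \<forall>x\<in>set (decs (pb P) (r 0)). x \<notin> set (take h (drop (Suc i) (spath v)))} else {})" for v i
  define U where "U = (\<Union>v<n. \<Union>i<n. B v i)"
  have fin: "finite ?S" by (rule coin_fin)
  have Sne: "?S \<noteq> {}"
  proof -
    have "(\<lambda>v. if v < n then replicate LL False else []) \<in> ?S" unfolding coin_space_def by auto
    then show ?thesis by blast
  qed
  have cardS: "real (card ?S) > 0" using fin Sne by (simp add: card_gt_0_iff)
  have good: "r \<in> E" if r: "r \<in> ?S" "r \<notin> U" for r
  proof -
    have hit: "hitp r (spath v)" if v: "v < n" and fd: "graph_dist n w s v \<noteq> \<infinity>" for v
      unfolding hitp_def
    proof (intro allI impI)
      fix i assume ih: "i + h < length (spath v)"
      define p where "p = spath v"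
      have p: "wpath n w s v p" "distinct p" using spath[OF fd] unfolding p_def by auto
      have pn: "set p \<subseteq> {..<n}" using p wk_set unfolding wpath_def by blast
      have "length p \<le> n" using spath_len[OF fd] unfolding p_def .
      then have i: "i < n" using ih unfolding p_def by simp
      have "r \<notin> B v i" using r(2) v i unfolding U_def by blast
      then obtain x where x: "x \<in> set (decs (pb P) (r 0))" "x \<in> set (take h (drop (Suc i) p))"
        unfolding B_def using fd ih unfolding p_def by (auto split: if_splits)
      obtain k where k: "k < length (take h (drop (Suc i) p))" "take h (drop (Suc i) p) ! k = x"
        using x(2) by (auto simp: in_set_conv_nth)
      have kh: "k < h" using k(1) by simp
      have xk: "x = p ! (Suc i + k)" using k kh ih unfolding p_def[symmetric] by simp
      have "x \<in> set p" using x(2) by (meson in_set_dropD in_set_takeD)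
      then have xn: "x < n" using pn by auto
      have "x \<in> Xs P s r" unfolding Xs_def using x(1) xn by simp
      then show "\<exists>j. i < j \<and> j \<le> i + h \<and> spath v ! j \<in> Xs P s r"
        using xk kh unfolding p_def by (intro exI[of _ "Suc i + k"]) auto
    qed
    have "\<forall>v<n. graph_dist n w s v \<le> estimate (ALG c) P inp r v \<and>
                estimate (ALG c) P inp r v \<le> ereal (1 + e) * graph_dist n w s v"
      using out_correct[OF _ Wb] hit by blast
    moreover have "real (total_msg_size (ALG c) P inp r) \<le> 200 * (c + 3) * LN ^ 3 * (real n ^ 2 * LW / (ep * real h))"
      using bits_ok[OF c hn r(1)] .
    ultimately show ?thesis unfolding E_def by blast
  qed
  have Bb: "real (card (?S \<inter> B v i)) \<le> real n powr (- (c + 2)) * real (card ?S)" for v i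
  proof (cases "graph_dist n w s v \<noteq> \<infinity> \<and> i + h < length (spath v)")
    case True
    define p where "p = spath v"
    have p: "wpath n w s v p" "distinct p" using spath True unfolding p_def by auto
    have pn: "set p \<subseteq> {..<n}" using p wk_set unfolding wpath_def by blast
    define T where "T = set (take h (drop (Suc i) p))"
    have T1: "T \<subseteq> {..<n}" unfolding T_def using pn by (meson in_set_dropD in_set_takeD subset_iff)
    have T2: "card T = h" unfolding T_def using p(2) True unfolding p_def[symmetric]
      by (auto simp add: distinct_card min_def)
    have "B v i = {r. \<forall>x\<in>set (decs (pb P) (r 0)). x \<notin> T}" unfolding B_def T_def p_def using True by simp
    then show ?thesis using bad_bound[OF c hn T1 T2] by simp
  next
    case False
    then have "B v i = {}" unfolding B_def by (simp only: if_False)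
    then show ?thesis by simp
  qed
  have p1: "measure_pmf.prob (coins n LL) E = real (card (?S \<inter> E)) / real (card ?S)"
    unfolding coins_def using measure_pmf_of_set[OF Sne fin] by simp
  have "?S - U \<subseteq> ?S \<inter> E" using good by blast
  then have c1: "card (?S - U) \<le> card (?S \<inter> E)" using fin by (intro card_mono) auto
  have c2: "card ?S = card (?S - U) + card (?S \<inter> U)"
  proof -
    have "?S = (?S - U) \<union> (?S \<inter> U)" by blast
    moreover have "card ((?S - U) \<union> (?S \<inter> U)) = card (?S - U) + card (?S \<inter> U)"
      using fin by (intro card_Un_disjoint) auto
    ultimately show ?thesis by simp
  qed
  have c3: "card (?S \<inter> U) \<le> (\<Sum>v<n. \<Sum>i<n. card (?S \<inter> B v i))"
  proof -
    have "?S \<inter> U = (\<Union>v<n. \<Union>i<n. ?S \<inter> B v i)" unfolding U_def by blast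
    also have "card \<dots> \<le> (\<Sum>v<n. card (\<Union>i<n. ?S \<inter> B v i))" by (rule card_UN_le) simp
    also have "\<dots> \<le> (\<Sum>v<n. \<Sum>i<n. card (?S \<inter> B v i))"
      by (intro sum_mono card_UN_le) simp
    finally show ?thesis .
  qed
  have c4: "real (\<Sum>v<n. \<Sum>i<n. card (?S \<inter> B v i)) \<le> real n * real n * (real n powr (- (c + 2)) * real (card ?S))"
  proof -
    have "real (\<Sum>v<n. \<Sum>i<n. card (?S \<inter> B v i)) = (\<Sum>v<n. \<Sum>i<n. real (card (?S \<inter> B v i)))" by simp
    also have "\<dots> \<le> (\<Sum>v<n. \<Sum>i<n. real n powr (- (c + 2)) * real (card ?S))"
      by (intro sum_mono) (rule Bb)
    also have "\<dots> = real n * real n * (real n powr (- (c + 2)) * real (card ?S))" by simp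
    finally show ?thesis .
  qed
  have pw: "real n * real n * real n powr (- (c + 2)) = real n powr (- c)"
  proof -
    have npos: "real n > 0" using n1 by simp
    have a: "real n powr 2 = real n * real n" using npos powr_realpow[OF npos, of 2] by (simp add: power2_eq_square)
    have b: "real n powr 2 * real n powr (- (c + 2)) = real n powr (2 + (- (c + 2)))"
      by (rule powr_add[symmetric])
    have "2 + (- (c + 2)) = - c" by simp
    then show ?thesis using a b by simp
  qed
  have "real (card (?S \<inter> E)) \<ge> real (card ?S) - real n powr (- c) * real (card ?S)"
  proof -
    have "real (card (?S \<inter> E)) \<ge> real (card (?S - U))" using c1 by simp
    moreover have "real (card ?S) = real (card (?S - U)) + real (card (?S \<inter> U))" using c2 by simp
    moreover have "real (card (?S \<inter> U)) \<le> real n powr (- c) * real (card ?S)"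
    proof -
      have "real (card (?S \<inter> U)) \<le> real (\<Sum>v<n. \<Sum>i<n. card (?S \<inter> B v i))" using c3 by (simp only: of_nat_le_iff)
      also have "\<dots> \<le> real n * real n * (real n powr (- (c + 2)) * real (card ?S))" by (rule c4)
      also have "\<dots> = real n powr (- c) * real (card ?S)" using pw by (simp add: mult.assoc[symmetric])
      finally show ?thesis .
    qed
    ultimately show ?thesis by linarith
  qed
  then have "real (card (?S \<inter> E)) / real (card ?S) \<ge> 1 - real n powr (- c)"
    using cardS by (simp add: le_divide_eq algebra_simps)
  then show ?thesis using p1 unfolding E_def by simp
qed

end

theorem lemma6p2:
  fixes c :: real
  assumes "c > 0"
  shows "\<exists>(A :: bc_alg) (C :: real) (k :: nat).
    \<forall>(n :: nat) (W :: nat) (\<epsilon> :: real) (h :: nat) (w :: nat \<Rightarrow> nat \<Rightarrow> nat option) (s :: nat).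
      s < n \<and> \<epsilon> > 0 \<and> 1 \<le> h \<and> h \<le> n \<and>
      (\<forall>u < n. \<forall>v < n. \<forall>x. w u v = Some x \<longrightarrow> x \<le> W) \<longrightarrow>
      real (num_rounds A (n, W, \<epsilon>, h))
         \<le> C * ln (real n + 2) ^ k * (real h * ln (real W + 2) / min \<epsilon> 1)
      \<and> measure_pmf.prob (coins n (num_coins A (n, W, \<epsilon>, h)))
          {r. (\<forall>v < n. graph_dist n w s v \<le> estimate A (n, W, \<epsilon>, h) (node_input n w s) r v
                     \<and> estimate A (n, W, \<epsilon>, h) (node_input n w s) r v
                          \<le> ereal (1 + \<epsilon>) * graph_dist n w s v)
              \<and> real (total_msg_size A (n, W, \<epsilon>, h) (node_input n w s) r)
                  \<le> C * ln (real n + 2) ^ k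
                      * (real n ^ 2 * ln (real W + 2) / (min \<epsilon> 1 * real h))}
        \<ge> 1 - real n powr (- c)"
proof (intro exI[of _ "ALG c"] exI[of _ "200 * (c + 3)"] exI[of _ "3::nat"] allI impI)
  fix n W :: nat and \<epsilon> :: real and h :: nat and w :: "nat \<Rightarrow> nat \<Rightarrow> nat option" and s :: nat
  assume H: "s < n \<and> \<epsilon> > 0 \<and> 1 \<le> h \<and> h \<le> n \<and> (\<forall>u < n. \<forall>v < n. \<forall>x. w u v = Some x \<longrightarrow> x \<le> W)"
  interpret I: stp c n W \<epsilon> h w s using H by unfold_locales auto
  have nc: "num_coins (ALG c) (n, W, \<epsilon>, h) = mm c n h * pb (n, W, \<epsilon>, h)" by (simp add: ALG_def)
  have nr: "num_rounds (ALG c) (n, W, \<epsilon>, h) = rr (n, W, \<epsilon>, h)" by (simp add: ALG_def)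
  show "real (num_rounds (ALG c) (n, W, \<epsilon>, h))
         \<le> 200 * (c + 3) * ln (real n + 2) ^ 3 * (real h * ln (real W + 2) / min \<epsilon> 1)
      \<and> measure_pmf.prob (coins n (num_coins (ALG c) (n, W, \<epsilon>, h)))
          {r. (\<forall>v < n. graph_dist n w s v \<le> estimate (ALG c) (n, W, \<epsilon>, h) (node_input n w s) r v
                     \<and> estimate (ALG c) (n, W, \<epsilon>, h) (node_input n w s) r v
                          \<le> ereal (1 + \<epsilon>) * graph_dist n w s v)
              \<and> real (total_msg_size (ALG c) (n, W, \<epsilon>, h) (node_input n w s) r)
                  \<le> 200 * (c + 3) * ln (real n + 2) ^ 3
                      * (real n ^ 2 * ln (real W + 2) / (min \<epsilon> 1 * real h))}
        \<ge> 1 - real n powr (- c)"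
    using I.rounds_ok[OF assms] I.prob_main[OF assms] H unfolding nc nr epsm_def by auto
qed


end
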